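(* Under the assumptions of Theorem 2 (unichain and strictly indexable bandit; the unique fixed point $\mathbf m^*$ of $\phi$ is a uniform global attractor of $(\Phi_t)$; $\mathbf m^*$ non-singular), let $\mathbf M^{(N)}(0)$ be distributed according to a stationary distribution of the configuration Markov chain of the $N$-bandit system under WIP ($\alpha N\in\mathbb N$). Then there exist constants $b,c>0$, independent of $N$, such that (i) $\|\mathbb E[\mathbf M^{(N)}(0)]-\mathbf m^*\|\le b\,e^{-cN}$, and (ii) $\mathbb P(\mathbf M^{(N)}(0)\notin\mathcal Z_{s(\mathbf m^* )})\le b\,e^{-cN}$.
   Context: Synchronous restless bandit model: $d\times d$ stochastic matrices $\mathbf P^0,\mathbf P^1$, rewards $\mathbf R^0,\mathbf R^1$, $\alpha\in(0,1)$; $N$ bandits with states in $\{1,\dots,d\}$ moving independently given actions, $\mathbb P(S_n(t+1)=j\mid S_n(t)=i,a_n(t)=a)=P^a_{ij}$. Strict indexability (Whittle indices from the single-bandit subsidy-$\nu$ problem where the passive action earns $R^0_i+\nu$, nested passive sets, pairwise distinct indices) is assumed, states labeled $\nu_1>\dots>\nu_d$; unichain: every policy gives a single recurrent class. WIP activates at each step the $\alpha N$ bandits with highest indices; $\mathbf M^{(N)}(t)\in\Delta^d=\{\mathbf m\in[0,1]^d:\sum m_i=1\}$ is the vector of fractions of bandits in each state under WIP, a Markov chain. $s(\mathbf m)$ is the unique $s$ with $\sum_{i<s}m_i\le\alpha<\sum_{i\le s}m_i$; $\mathcal Z_i=\{\mathbf m\in\Delta^d:s(\mathbf m)=i\}$;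 $\phi_j(\mathbf m)=\sum_{i=1}^{s(\mathbf m)-1} m_i P^1_{ij} + (\alpha-\sum_{i=1}^{s(\mathbf m)-1}m_i)P^1_{s(\mathbf m)j} + (\sum_{i=1}^{s(\mathbf m)}m_i - \alpha)P^0_{s(\mathbf m)j} + \sum_{i=s(\mathbf m)+1}^{d} m_i P^0_{ij}$ with unique fixed point $\mathbf m^*$; $\Phi_0=\mathrm{id}$, $\Phi_{t+1}=\phi\circ\Phi_t$. Uniform global attractor: for all $\epsilon>0$ there is $T(\epsilon)$ with $\|\Phi_t(\mathbf m)-\mathbf m^*\|\le\epsilon$ for $t\ge T(\epsilon)$ and all $\mathbf m$. Singular: $\sum_{j\le i}m_j=\alpha$ for some $i$. $\|\cdot\|$ sup norm. *)

theory Defs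
  imports "HOL-Probability.Probability"
begin

text \<open>States are labelled 1..d. Matrices and rewards are functions on nat,
  only their values on {1..d} matter. Action: True = active (P1,R1), False = passive.\<close>

definition stochastic :: "nat \<Rightarrow> (nat \<Rightarrow> nat \<Rightarrow> real) \<Rightarrow> bool" where
  "stochastic d P \<longleftrightarrow> (\<forall>i\<in>{1..d}. (\<forall>j\<in>{1..d}. 0 \<le> P i j) \<and> (\<Sum>j=1..d. P i j) = 1)"

definition policy_matrix :: "(nat \<Rightarrow> nat \<Rightarrow> real) \<Rightarrow> (nat \<Rightarrow> nat \<Rightarrow> real) \<Rightarrow> (nat \<Rightarrow> bool)
    \<Rightarrow> nat \<Rightarrow> nat \<Rightarrow> real" where
  "policy_matrix P0 P1 \<pi> i j = (if \<pi> i then P1 i j else P0 i j)"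

definition reach :: "nat \<Rightarrow> (nat \<Rightarrow> nat \<Rightarrow> real) \<Rightarrow> nat \<Rightarrow> nat \<Rightarrow> bool" where
  "reach d Q i j \<longleftrightarrow> (i, j) \<in> {(x, y). x \<in> {1..d} \<and> y \<in> {1..d} \<and> Q x y > 0}\<^sup>*"

definition recurrent_state :: "nat \<Rightarrow> (nat \<Rightarrow> nat \<Rightarrow> real) \<Rightarrow> nat \<Rightarrow> bool" where
  "recurrent_state d Q i \<longleftrightarrow> i \<in> {1..d} \<and> (\<forall>j. reach d Q i j \<longrightarrow> reach d Q j i)"

definition single_recurrent_class :: "nat \<Rightarrow> (nat \<Rightarrow> nat \<Rightarrow> real) \<Rightarrow> bool" where
  "single_recurrent_class d Q \<longleftrightarrow> (\<exists>i. recurrent_state d Q i) \<and>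
     (\<forall>i j. recurrent_state d Q i \<and> recurrent_state d Q j \<longrightarrow> reach d Q i j)"

definition unichain :: "nat \<Rightarrow> (nat \<Rightarrow> nat \<Rightarrow> real) \<Rightarrow> (nat \<Rightarrow> nat \<Rightarrow> real) \<Rightarrow> bool" where
  "unichain d P0 P1 \<longleftrightarrow> (\<forall>\<pi>. single_recurrent_class d (policy_matrix P0 P1 \<pi>))"

definition bellman :: "nat \<Rightarrow> (nat \<Rightarrow> nat \<Rightarrow> real) \<Rightarrow> (nat \<Rightarrow> nat \<Rightarrow> real) \<Rightarrow> (nat \<Rightarrow> real)
    \<Rightarrow> (nat \<Rightarrow> real) \<Rightarrow> real \<Rightarrow> real \<Rightarrow> (nat \<Rightarrow> real) \<Rightarrow> bool" where
  "bellman d P0 P1 R0 R1 \<nu> g h \<longleftrightarrow> (\<forall>i\<in>{1..d}.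
      g + h i = max (R0 i + \<nu> + (\<Sum>j=1..d. P0 i j * h j)) (R1 i + (\<Sum>j=1..d. P1 i j * h j)))"

definition passive_set :: "nat \<Rightarrow> (nat \<Rightarrow> nat \<Rightarrow> real) \<Rightarrow> (nat \<Rightarrow> nat \<Rightarrow> real) \<Rightarrow> (nat \<Rightarrow> real)
    \<Rightarrow> (nat \<Rightarrow> real) \<Rightarrow> real \<Rightarrow> nat set" where
  "passive_set d P0 P1 R0 R1 \<nu> = {i\<in>{1..d}. \<exists>g h. bellman d P0 P1 R0 R1 \<nu> g h \<and>
      R0 i + \<nu> + (\<Sum>j=1..d. P0 i j * h j) \<ge> R1 i + (\<Sum>j=1..d. P1 i j * h j)}"

definition whittle_index :: "nat \<Rightarrow> (nat \<Rightarrow> nat \<Rightarrow> real) \<Rightarrow> (nat \<Rightarrow> nat \<Rightarrow> real) \<Rightarrow> (nat \<Rightarrow> real)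
    \<Rightarrow> (nat \<Rightarrow> real) \<Rightarrow> nat \<Rightarrow> real" where
  "whittle_index d P0 P1 R0 R1 i = Inf {\<nu>. i \<in> passive_set d P0 P1 R0 R1 \<nu>}"

definition strictly_indexable_sorted :: "nat \<Rightarrow> (nat \<Rightarrow> nat \<Rightarrow> real) \<Rightarrow> (nat \<Rightarrow> nat \<Rightarrow> real)
    \<Rightarrow> (nat \<Rightarrow> real) \<Rightarrow> (nat \<Rightarrow> real) \<Rightarrow> bool" where
  "strictly_indexable_sorted d P0 P1 R0 R1 \<longleftrightarrow>
     (\<forall>\<nu> \<nu>'. \<nu> \<le> \<nu>' \<longrightarrow> passive_set d P0 P1 R0 R1 \<nu> \<subseteq> passive_set d P0 P1 R0 R1 \<nu>') \<and>
     (\<forall>i\<in>{1..d}. \<forall>j\<in>{1..d}. i < j \<longrightarrow> whittle_index d P0 P1 R0 R1 i > whittle_index d P0 P1 R0 R1 j)"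

definition simplex_d :: "nat \<Rightarrow> (nat \<Rightarrow> real) set" where
  "simplex_d d = {m. (\<forall>i\<in>{1..d}. 0 \<le> m i \<and> m i \<le> 1) \<and> (\<Sum>i=1..d. m i) = 1}"

definition s_of :: "nat \<Rightarrow> real \<Rightarrow> (nat \<Rightarrow> real) \<Rightarrow> nat" where
  "s_of d \<alpha> m = (THE s. s \<in> {1..d} \<and> (\<Sum>i\<in>{1..<s}. m i) \<le> \<alpha> \<and> \<alpha> < (\<Sum>i\<in>{1..s}. m i))"

definition Z :: "nat \<Rightarrow> real \<Rightarrow> nat \<Rightarrow> (nat \<Rightarrow> real) set" where
  "Z d \<alpha> i = {m \<in> simplex_d d. s_of d \<alpha> m = i}"

definition phi :: "nat \<Rightarrow> (nat \<Rightarrow> nat \<Rightarrow> real) \<Rightarrow> (nat \<Rightarrow> nat \<Rightarrow> real) \<Rightarrow> real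
    \<Rightarrow> (nat \<Rightarrow> real) \<Rightarrow> nat \<Rightarrow> real" where
  "phi d P0 P1 \<alpha> m j = (let s = s_of d \<alpha> m in
      (\<Sum>i\<in>{1..<s}. m i * P1 i j)
      + (\<alpha> - (\<Sum>i\<in>{1..<s}. m i)) * P1 s j
      + ((\<Sum>i\<in>{1..s}. m i) - \<alpha>) * P0 s j
      + (\<Sum>i\<in>{s<..d}. m i * P0 i j))"

definition singular :: "nat \<Rightarrow> real \<Rightarrow> (nat \<Rightarrow> real) \<Rightarrow> bool" where
  "singular d \<alpha> m \<longleftrightarrow> (\<exists>i\<in>{1..d}. (\<Sum>j\<in>{1..i}. m j) = \<alpha>)"

definition uniform_global_attractor :: "nat \<Rightarrow> ((nat \<Rightarrow> real) \<Rightarrow> (nat \<Rightarrow> real)) \<Rightarrow> (nat \<Rightarrow> real) \<Rightarrow> bool" where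
  "uniform_global_attractor d f mstar \<longleftrightarrow>
     (\<forall>\<epsilon>>0. \<exists>T. \<forall>t\<ge>T. \<forall>m\<in>simplex_d d. \<forall>i\<in>{1..d}. \<bar>(f ^^ t) m i - mstar i\<bar> \<le> \<epsilon>)"

definition row_pmf :: "nat \<Rightarrow> (nat \<Rightarrow> nat \<Rightarrow> real) \<Rightarrow> nat \<Rightarrow> nat pmf" where
  "row_pmf d P i = embed_pmf (\<lambda>j. if j \<in> {1..d} then P i j else 0)"

fun sample_counts :: "nat \<Rightarrow> nat pmf \<Rightarrow> (nat \<Rightarrow> nat) pmf" where
  "sample_counts 0 p = return_pmf (\<lambda>_. 0)"
| "sample_counts (Suc k) p = bind_pmf (sample_counts k p) (\<lambda>c. map_pmf (\<lambda>j. c(j := c j + 1)) p)"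

definition add_counts :: "(nat \<Rightarrow> nat) pmf \<Rightarrow> (nat \<Rightarrow> nat) pmf \<Rightarrow> (nat \<Rightarrow> nat) pmf" where
  "add_counts p q = bind_pmf p (\<lambda>x. map_pmf (\<lambda>y j. x j + y j) q)"

text \<open>Number of activated bandits in state i when A bandits with highest indices are activated.\<close>
definition n_active :: "nat \<Rightarrow> (nat \<Rightarrow> nat) \<Rightarrow> nat \<Rightarrow> nat" where
  "n_active A n i = min (n i) (A - (\<Sum>j\<in>{1..<i}. n j))"

definition wip_step :: "nat \<Rightarrow> (nat \<Rightarrow> nat \<Rightarrow> real) \<Rightarrow> (nat \<Rightarrow> nat \<Rightarrow> real) \<Rightarrow> nat
    \<Rightarrow> (nat \<Rightarrow> nat) \<Rightarrow> (nat \<Rightarrow> nat) pmf" where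
  "wip_step d P0 P1 A n = foldr (\<lambda>i acc. add_counts acc
       (add_counts (sample_counts (n_active A n i) (row_pmf d P1 i))
                   (sample_counts (n i - n_active A n i) (row_pmf d P0 i))))
     [1..<d+1] (return_pmf (\<lambda>_. 0))"

definition config_space :: "nat \<Rightarrow> nat \<Rightarrow> (nat \<Rightarrow> nat) set" where
  "config_space d N = {n. (\<forall>i. i \<notin> {1..d} \<longrightarrow> n i = 0) \<and> (\<Sum>i=1..d. n i) = N}"

definition stationary_wip :: "nat \<Rightarrow> (nat \<Rightarrow> nat \<Rightarrow> real) \<Rightarrow> (nat \<Rightarrow> nat \<Rightarrow> real) \<Rightarrow> nat \<Rightarrow> nat
    \<Rightarrow> (nat \<Rightarrow> nat) pmf \<Rightarrow> bool" where
  "stationary_wip d P0 P1 N A \<mu> \<longleftrightarrow>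
     set_pmf \<mu> \<subseteq> config_space d N \<and> bind_pmf \<mu> (wip_step d P0 P1 A) = \<mu>"

definition frac :: "nat \<Rightarrow> (nat \<Rightarrow> nat) \<Rightarrow> nat \<Rightarrow> real" where
  "frac N n i = real (n i) / real N"

end

theory Submission
  imports Defs
begin



definition bnd :: "nat \<Rightarrow> (nat \<Rightarrow> real) \<Rightarrow> real \<Rightarrow> bool" where
  "bnd d w e \<longleftrightarrow> (\<forall>i\<in>{1..d}. \<bar>w i\<bar> \<le> e)"

definition act :: "real \<Rightarrow> (nat \<Rightarrow> real) \<Rightarrow> nat \<Rightarrow> real" where
  "act \<alpha> m i = min (m i) (max 0 (\<alpha> - (\<Sum>k\<in>{1..<i}. m k)))"

definition phi2 :: "nat \<Rightarrow> (nat \<Rightarrow> nat \<Rightarrow> real) \<Rightarrow> (nat \<Rightarrow> nat \<Rightarrow> real) \<Rightarrow> real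
    \<Rightarrow> (nat \<Rightarrow> real) \<Rightarrow> nat \<Rightarrow> real" where
  "phi2 d P0 P1 \<alpha> m j = (\<Sum>i=1..d. act \<alpha> m i * P1 i j + (m i - act \<alpha> m i) * P0 i j)"

definition psi :: "nat \<Rightarrow> (nat \<Rightarrow> nat \<Rightarrow> real) \<Rightarrow> (nat \<Rightarrow> nat \<Rightarrow> real) \<Rightarrow> real \<Rightarrow> nat
    \<Rightarrow> (nat \<Rightarrow> real) \<Rightarrow> nat \<Rightarrow> real" where
  "psi d P0 P1 \<alpha> s m j = 
      (\<Sum>i\<in>{1..<s}. m i * P1 i j)
      + (\<alpha> - (\<Sum>i\<in>{1..<s}. m i)) * P1 s j
      + ((\<Sum>i\<in>{1..s}. m i) - \<alpha>) * P0 s j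
      + (\<Sum>i\<in>{s<..d}. m i * P0 i j)"

definition Lin :: "nat \<Rightarrow> (nat \<Rightarrow> nat \<Rightarrow> real) \<Rightarrow> (nat \<Rightarrow> nat \<Rightarrow> real) \<Rightarrow> nat
    \<Rightarrow> (nat \<Rightarrow> real) \<Rightarrow> nat \<Rightarrow> real" where
  "Lin d P0 P1 s w j = 
      (\<Sum>i\<in>{1..<s}. w i * P1 i j)
      - (\<Sum>i\<in>{1..<s}. w i) * P1 s j
      + (\<Sum>i\<in>{1..s}. w i) * P0 s j
      + (\<Sum>i\<in>{s<..d}. w i * P0 i j)"

lemma sum_1s: "(s::nat) \<ge> 1 \<Longrightarrow> (\<Sum>i\<in>{1..s}. f i) = (\<Sum>i\<in>{1..<s}. f i) + (f s :: real)"
proof -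
  assume "s \<ge> 1"
  then have "{1..s} = insert s {1..<s}"
    by (simp add: atLeastLessThanSuc_atLeastAtMost[symmetric] atLeastLessThanSuc)
  then show ?thesis by simp
qed

lemma split3: "(s::nat) \<in> {1..d} \<Longrightarrow> (\<Sum>i\<in>{1..d}. f i) = (\<Sum>i\<in>{1..<s}. f i) + f s + (\<Sum>i\<in>{s<..d}. (f i :: real))"
proof -
  assume s: "s \<in> {1..d}"
  have e1: "{1..d} = {1..<s} \<union> {s..d}" using s by auto
  have e2: "{1..<s} \<inter> {s..d} = {}" by auto
  have e3: "{s..d} = insert s {s<..d}" using s by auto
  have "(\<Sum>i\<in>{1..d}. f i) = (\<Sum>i\<in>{1..<s}. f i) + (\<Sum>i\<in>{s..d}. f i)"
    unfolding e1 by (rule sum.union_disjoint) (auto simp: e2)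
  also have "(\<Sum>i\<in>{s..d}. f i) = f s + (\<Sum>i\<in>{s<..d}. f i)"
    unfolding e3 by (rule sum.insert) auto
  finally show ?thesis by simp
qed

lemma simplex_nonneg: "m \<in> simplex_d d \<Longrightarrow> i \<in> {1..d} \<Longrightarrow> 0 \<le> m i"
  by (auto simp: simplex_d_def)

lemma psum_mono:
  assumes "\<forall>i\<in>{1..d}. 0 \<le> m i" "(a::nat) \<le> b" "b \<le> d + 1"
  shows "(\<Sum>i\<in>{1..<a}. m i) \<le> (\<Sum>i\<in>{1..<b}. (m i::real))"
  using assms by (intro sum_mono2) auto

lemma s_uniq:
  fixes \<alpha> :: real
  assumes nn: "\<forall>i\<in>{1..d}. 0 \<le> m i"
    and s1: "(s1::nat) \<in> {1..d}" "(\<Sum>i\<in>{1..<s1}. m i) \<le> \<alpha>" "\<alpha> < (\<Sum>i\<in>{1..s1}. m i)"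
    and s2: "s2 \<in> {1..d}" "(\<Sum>i\<in>{1..<s2}. m i) \<le> \<alpha>" "\<alpha> < (\<Sum>i\<in>{1..s2}. m i)"
  shows "s1 = s2"
proof (rule ccontr)
  assume "s1 \<noteq> s2"
  then consider "s1 < s2" | "s2 < s1" by linarith
  then show False
  proof cases
    case 1
    have "(\<Sum>i\<in>{1..s1}. m i) = (\<Sum>i\<in>{1..<Suc s1}. m i)" by (simp add: atLeastLessThanSuc_atLeastAtMost)
    also have "\<dots> \<le> (\<Sum>i\<in>{1..<s2}. m i)" using 1 s2 by (intro psum_mono[OF nn]) auto
    finally show False using s1 s2 by linarith
  next
    case 2
    have "(\<Sum>i\<in>{1..s2}. m i) = (\<Sum>i\<in>{1..<Suc s2}. m i)" by (simp add: atLeastLessThanSuc_atLeastAtMost)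
    also have "\<dots> \<le> (\<Sum>i\<in>{1..<s1}. m i)" using 2 s1 by (intro psum_mono[OF nn]) auto
    finally show False using s1 s2 by linarith
  qed
qed

lemma s_of_eq:
  assumes nn: "\<forall>i\<in>{1..d}. 0 \<le> m i"
    and s: "(s::nat) \<in> {1..d}" "(\<Sum>i\<in>{1..<s}. m i) \<le> \<alpha>" "\<alpha> < (\<Sum>i\<in>{1..s}. m i)"
  shows "s_of d \<alpha> m = s"
  unfolding s_of_def
  apply (rule the1_equality)
  using s s_uniq[OF nn] apply blast
  using s by blast

lemma s_of_spec:
  assumes m: "m \<in> simplex_d d" and a: "0 < \<alpha>" "\<alpha> < 1"
  shows "s_of d \<alpha> m \<in> {1..d} \<and> (\<Sum>i\<in>{1..<s_of d \<alpha> m}. m i) \<le> \<alpha> \<and> \<alpha> < (\<Sum>i\<in>{1..s_of d \<alpha> m}. m i)"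
proof -
  have nn: "\<forall>i\<in>{1..d}. 0 \<le> m i" using m by (auto simp: simplex_d_def)
  have sum1: "(\<Sum>i\<in>{1..d}. m i) = 1" using m by (auto simp: simplex_d_def)
  define s where "s = (LEAST s. \<alpha> < (\<Sum>i\<in>{1..s}. m i))"
  have ex: "\<alpha> < (\<Sum>i\<in>{1..d}. m i)" using sum1 a by simp
  have s1: "\<alpha> < (\<Sum>i\<in>{1..s}. m i)" unfolding s_def by (rule LeastI[of _ d]) (rule ex)
  have sd: "s \<le> d" unfolding s_def by (rule Least_le) (rule ex)
  have s0: "s \<noteq> 0" using s1 a by (cases s) auto
  have s2: "(\<Sum>i\<in>{1..<s}. m i) \<le> \<alpha>"
  proof -
    have "\<not> \<alpha> < (\<Sum>i\<in>{1..s - 1}. m i)" unfolding s_def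
      using not_less_Least[of "s - 1" "\<lambda>s. \<alpha> < (\<Sum>i\<in>{1..s}. m i)"] s0 s_def by simp
    moreover have "{1..<s} = {1..s-1}" using s0 by auto
    ultimately show ?thesis by simp
  qed
  have "s \<in> {1..d}" using s0 sd by auto
  then have "s_of d \<alpha> m = s" using s_of_eq[OF nn] s1 s2 by blast
  then show ?thesis using \<open>s \<in> {1..d}\<close> s1 s2 by simp
qed




lemma minmax_lip:
  fixes a b a' b' e :: real
  assumes "\<bar>a - a'\<bar> \<le> e" "\<bar>b - b'\<bar> \<le> e"
  shows "\<bar>min a (max 0 b) - min a' (max 0 b')\<bar> \<le> e"
  using assms by (simp add: min_def max_def abs_le_iff)

lemma sum_diff_bound:
  fixes m m' :: "nat \<Rightarrow> real" and e :: real
  assumes "\<forall>k\<in>A. \<bar>m k - m' k\<bar> \<le> e" "finite A"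
  shows "\<bar>(\<Sum>k\<in>A. m k) - (\<Sum>k\<in>A. m' k)\<bar> \<le> card A * e"
proof -
  have "\<bar>(\<Sum>k\<in>A. m k) - (\<Sum>k\<in>A. m' k)\<bar> = \<bar>\<Sum>k\<in>A. m k - m' k\<bar>" by (simp add: sum_subtractf)
  also have "\<dots> \<le> (\<Sum>k\<in>A. \<bar>m k - m' k\<bar>)" by (rule sum_abs)
  also have "\<dots> \<le> card A * e" using sum_bounded_above[of A "\<lambda>k. \<bar>m k - m' k\<bar>" e] assms by simp
  finally show ?thesis .
qed

lemma act_lip:
  assumes i: "i \<in> {1..d}" and b: "\<forall>k\<in>{1..d}. \<bar>m k - m' k\<bar> \<le> e" and e: "0 \<le> e"
  shows "\<bar>act \<alpha> m i - act \<alpha> m' i\<bar> \<le> real d * e"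
proof -
  have "\<bar>(\<Sum>k\<in>{1..<i}. m k) - (\<Sum>k\<in>{1..<i}. m' k)\<bar> \<le> card {1..<i} * e"
    using b i by (intro sum_diff_bound) auto
  also have "\<dots> \<le> real d * e" using i e by (intro mult_right_mono) auto
  finally have h1: "\<bar>(\<alpha> - (\<Sum>k\<in>{1..<i}. m k)) - (\<alpha> - (\<Sum>k\<in>{1..<i}. m' k))\<bar> \<le> real d * e" by simp
  have "\<bar>m i - m' i\<bar> \<le> e" using b i by auto
  also have "e \<le> real d * e" using i e by (simp add: mult_le_cancel_right1)
  finally have h2: "\<bar>m i - m' i\<bar> \<le> real d * e" .
  show ?thesis unfolding act_def by (rule minmax_lip[OF h2 h1])
qed

lemma stoch_nn: "stochastic d P \<Longrightarrow> i \<in> {1..d} \<Longrightarrow> j \<in> {1..d} \<Longrightarrow> 0 \<le> P i j"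
  by (auto simp: stochastic_def)

lemma stoch_sum: "stochastic d P \<Longrightarrow> i \<in> {1..d} \<Longrightarrow> (\<Sum>j=1..d. P i j) = 1"
  by (auto simp: stochastic_def)

lemma stoch_le1: "stochastic d P \<Longrightarrow> i \<in> {1..d} \<Longrightarrow> j \<in> {1..d} \<Longrightarrow> P i j \<le> 1"
proof -
  assume a: "stochastic d P" "i \<in> {1..d}" "j \<in> {1..d}"
  have "P i j \<le> (\<Sum>j=1..d. P i j)" using a by (intro member_le_sum) (auto simp: stochastic_def)
  then show ?thesis using stoch_sum[OF a(1,2)] by simp
qed

lemma act_nn: "m \<in> simplex_d d \<Longrightarrow> i \<in> {1..d} \<Longrightarrow> 0 \<le> act \<alpha> m i"
  by (auto simp: act_def simplex_d_def)

lemma act_le: "act \<alpha> m i \<le> m i"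
  by (auto simp: act_def)

lemma phi2_lip:
  assumes s0: "stochastic d P0" and s1: "stochastic d P1"
    and b: "\<forall>k\<in>{1..d}. \<bar>m k - m' k\<bar> \<le> e" and e: "0 \<le> e" and j: "j \<in> {1..d}"
  shows "\<bar>phi2 d P0 P1 \<alpha> m j - phi2 d P0 P1 \<alpha> m' j\<bar> \<le> real d * (2 * real d + 1) * e"
proof -
  have t: "\<bar>(act \<alpha> m i * P1 i j + (m i - act \<alpha> m i) * P0 i j) - (act \<alpha> m' i * P1 i j + (m' i - act \<alpha> m' i) * P0 i j)\<bar>
      \<le> (2 * real d + 1) * e" if i: "i \<in> {1..d}" for i
  proof -
    have a: "\<bar>act \<alpha> m i - act \<alpha> m' i\<bar> \<le> real d * e" by (rule act_lip[OF i b e])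
    have mi: "\<bar>m i - m' i\<bar> \<le> e" using b i by auto
    have p1: "0 \<le> P1 i j" "P1 i j \<le> 1" using s1 i j by (auto intro: stoch_nn stoch_le1)
    have p0: "0 \<le> P0 i j" "P0 i j \<le> 1" using s0 i j by (auto intro: stoch_nn stoch_le1)
    have "\<bar>(act \<alpha> m i * P1 i j + (m i - act \<alpha> m i) * P0 i j) - (act \<alpha> m' i * P1 i j + (m' i - act \<alpha> m' i) * P0 i j)\<bar>
       = \<bar>(act \<alpha> m i - act \<alpha> m' i) * P1 i j + ((m i - m' i) - (act \<alpha> m i - act \<alpha> m' i)) * P0 i j\<bar>"
      by (simp add: algebra_simps)
    also have "\<dots> \<le> \<bar>act \<alpha> m i - act \<alpha> m' i\<bar> * P1 i j + \<bar>(m i - m' i) - (act \<alpha> m i - act \<alpha> m' i)\<bar> * P0 i j"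
      using p0 p1 by (simp add: abs_mult abs_triangle_ineq order_trans[OF abs_triangle_ineq])
    also have "\<dots> \<le> real d * e * 1 + (e + real d * e) * 1"
      apply (intro add_mono mult_mono)
      using a mi p0 p1 e by (auto intro: order_trans[OF abs_triangle_ineq4])
    finally show ?thesis by (simp add: algebra_simps)
  qed
  have "\<bar>phi2 d P0 P1 \<alpha> m j - phi2 d P0 P1 \<alpha> m' j\<bar> \<le> card {1..d} * ((2 * real d + 1) * e)"
    unfolding phi2_def by (intro sum_diff_bound) (use t in auto)
  then show ?thesis by simp
qed

lemma phi2_simplex:
  assumes s0: "stochastic d P0" and s1: "stochastic d P1" and m: "m \<in> simplex_d d"
  shows "phi2 d P0 P1 \<alpha> m \<in> simplex_d d"
proof -
  have nn: "0 \<le> phi2 d P0 P1 \<alpha> m j" if j: "j \<in> {1..d}" for j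
    unfolding phi2_def
    using act_nn[OF m] act_le stoch_nn[OF s0] stoch_nn[OF s1] j
    by (intro sum_nonneg add_nonneg_nonneg mult_nonneg_nonneg) auto
  have "(\<Sum>j=1..d. phi2 d P0 P1 \<alpha> m j) = (\<Sum>i=1..d. \<Sum>j=1..d. act \<alpha> m i * P1 i j + (m i - act \<alpha> m i) * P0 i j)"
    unfolding phi2_def by (rule sum.swap)
  also have "\<dots> = (\<Sum>i=1..d. act \<alpha> m i * (\<Sum>j=1..d. P1 i j) + (m i - act \<alpha> m i) * (\<Sum>j=1..d. P0 i j))"
    by (simp add: sum.distrib sum_distrib_left)
  also have "\<dots> = (\<Sum>i=1..d. m i)"
  proof (rule sum.cong)
    fix i assume "i \<in> {1..d}"
    then show "act \<alpha> m i * (\<Sum>j=1..d. P1 i j) + (m i - act \<alpha> m i) * (\<Sum>j=1..d. P0 i j) = m i"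
      using stoch_sum[OF s0] stoch_sum[OF s1] by simp
  qed simp
  also have "\<dots> = 1" using m by (simp add: simplex_d_def)
  finally have sum1: "(\<Sum>j=1..d. phi2 d P0 P1 \<alpha> m j) = 1" .
  have le1: "phi2 d P0 P1 \<alpha> m j \<le> 1" if j: "j \<in> {1..d}" for j
  proof -
    have "phi2 d P0 P1 \<alpha> m j \<le> (\<Sum>j=1..d. phi2 d P0 P1 \<alpha> m j)"
      using j nn by (intro member_le_sum) auto
    then show ?thesis using sum1 by simp
  qed
  show ?thesis using nn le1 sum1 by (auto simp: simplex_d_def)
qed

lemma phi_eq_phi2:
  assumes m: "m \<in> simplex_d d" and a: "0 < \<alpha>" "\<alpha> < 1"
  shows "phi d P0 P1 \<alpha> m j = phi2 d P0 P1 \<alpha> m j"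
proof -
  define s where "s = s_of d \<alpha> m"
  have sp: "s \<in> {1..d}" "(\<Sum>i\<in>{1..<s}. m i) \<le> \<alpha>" "\<alpha> < (\<Sum>i\<in>{1..s}. m i)"
    using s_of_spec[OF m a] unfolding s_def by auto
  have nn: "\<forall>i\<in>{1..d}. 0 \<le> m i" using m by (auto simp: simplex_d_def)
  have S: "(\<Sum>i\<in>{1..s}. m i) = (\<Sum>i\<in>{1..<s}. m i) + m s" using sp by (intro sum_1s) auto
  have a1: "act \<alpha> m i = m i" if i: "i \<in> {1..<s}" for i
  proof -
    have "(\<Sum>k\<in>{1..i}. m k) \<le> (\<Sum>k\<in>{1..<s}. m k)" using i sp nn by (intro sum_mono2) auto
    moreover have "(\<Sum>k\<in>{1..i}. m k) = (\<Sum>k\<in>{1..<i}. m k) + m i" using i by (intro sum_1s) auto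
    moreover have "0 \<le> m i" using nn i sp by auto
    ultimately show ?thesis using sp unfolding act_def by (simp add: min_def max_def)
  qed
  have a2: "act \<alpha> m s = \<alpha> - (\<Sum>i\<in>{1..<s}. m i)" using sp S unfolding act_def by (simp add: min_def max_def)
  have a3: "act \<alpha> m i = 0" if i: "i \<in> {s<..d}" for i
  proof -
    have "(\<Sum>k\<in>{1..s}. m k) \<le> (\<Sum>k\<in>{1..<i}. m k)" using i sp nn by (intro sum_mono2) auto
    moreover have "0 \<le> m i" using nn i sp by auto
    ultimately show ?thesis using sp unfolding act_def by (simp add: min_def max_def)
  qed
  have "phi2 d P0 P1 \<alpha> m j = (\<Sum>i\<in>{1..<s}. act \<alpha> m i * P1 i j + (m i - act \<alpha> m i) * P0 i j)
      + (act \<alpha> m s * P1 s j + (m s - act \<alpha> m s) * P0 s j)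
      + (\<Sum>i\<in>{s<..d}. act \<alpha> m i * P1 i j + (m i - act \<alpha> m i) * P0 i j)"
    unfolding phi2_def by (rule split3[OF sp(1)])
  also have "(\<Sum>i\<in>{1..<s}. act \<alpha> m i * P1 i j + (m i - act \<alpha> m i) * P0 i j) = (\<Sum>i\<in>{1..<s}. m i * P1 i j)"
    by (rule sum.cong) (auto simp: a1)
  also have "(\<Sum>i\<in>{s<..d}. act \<alpha> m i * P1 i j + (m i - act \<alpha> m i) * P0 i j) = (\<Sum>i\<in>{s<..d}. m i * P0 i j)"
    by (rule sum.cong) (auto simp: a3)
  finally show ?thesis unfolding phi_def Let_def s_def[symmetric] a2 S by (simp add: algebra_simps)
qed




lemma simplex_cong: "(\<forall>j\<in>{1..d}. f j = g j) \<Longrightarrow> f \<in> simplex_d d \<longleftrightarrow> g \<in> simplex_d d"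
proof -
  assume h: "\<forall>j\<in>{1..d}. f j = g j"
  then have "(\<Sum>i=1..d. f i) = (\<Sum>i=1..d. g i)" by (intro sum.cong) auto
  then show ?thesis using h by (auto simp: simplex_d_def)
qed

lemma phi_simplex:
  assumes s0: "stochastic d P0" and s1: "stochastic d P1" and m: "m \<in> simplex_d d"
    and a: "0 < \<alpha>" "\<alpha> < 1"
  shows "phi d P0 P1 \<alpha> m \<in> simplex_d d"
proof -
  have "phi d P0 P1 \<alpha> m = phi2 d P0 P1 \<alpha> m" using phi_eq_phi2[OF m a] by auto
  then show ?thesis using phi2_simplex[OF s0 s1 m] by simp
qed

lemma phi2_cong:
  assumes h: "\<forall>i\<in>{1..d}. m i = m' i"
  shows "phi2 d P0 P1 \<alpha> m = phi2 d P0 P1 \<alpha> m'"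
proof -
  have "act \<alpha> m i = act \<alpha> m' i" if "i \<in> {1..d}" for i
  proof -
    have "(\<Sum>k\<in>{1..<i}. m k) = (\<Sum>k\<in>{1..<i}. m' k)" using h that by (intro sum.cong) auto
    then show ?thesis using h that by (simp add: act_def)
  qed
  then show ?thesis unfolding phi2_def using h by (intro ext sum.cong) auto
qed

lemma phi_cong:
  assumes m: "m \<in> simplex_d d" and h: "\<forall>i\<in>{1..d}. m i = m' i" and a: "0 < \<alpha>" "\<alpha> < 1"
  shows "phi d P0 P1 \<alpha> m = phi d P0 P1 \<alpha> m'"
proof -
  have m': "m' \<in> simplex_d d" using simplex_cong[OF h] m by simp
  show ?thesis using phi_eq_phi2[OF m a] phi_eq_phi2[OF m' a] phi2_cong[OF h] by auto
qed

lemma iter_simplex: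
  assumes s0: "stochastic d P0" and s1: "stochastic d P1" and m: "m \<in> simplex_d d"
    and a: "0 < \<alpha>" "\<alpha> < 1"
  shows "(phi d P0 P1 \<alpha> ^^ t) m \<in> simplex_d d"
  by (induction t) (auto intro: phi_simplex[OF s0 s1 _ a] m)

lemma iter_lip:
  assumes s0: "stochastic d P0" and s1: "stochastic d P1" and m: "m \<in> simplex_d d" and m': "m' \<in> simplex_d d"
    and a: "0 < \<alpha>" "\<alpha> < 1"
    and b: "\<forall>k\<in>{1..d}. \<bar>m k - m' k\<bar> \<le> e" and e: "0 \<le> e"
  shows "\<forall>j\<in>{1..d}. \<bar>(phi d P0 P1 \<alpha> ^^ t) m j - (phi d P0 P1 \<alpha> ^^ t) m' j\<bar> \<le> (real d * (2 * real d + 1)) ^ t * e"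
proof (induction t)
  case 0
  then show ?case using b by simp
next
  case (Suc t)
  let ?x = "(phi d P0 P1 \<alpha> ^^ t) m" and ?y = "(phi d P0 P1 \<alpha> ^^ t) m'"
  have x: "?x \<in> simplex_d d" and y: "?y \<in> simplex_d d" using iter_simplex[OF s0 s1 _ a] m m' by auto
  have e': "0 \<le> (real d * (2 * real d + 1)) ^ t * e" using e by simp
  show ?case
  proof
    fix j assume j: "j \<in> {1..d}"
    have "\<bar>phi2 d P0 P1 \<alpha> ?x j - phi2 d P0 P1 \<alpha> ?y j\<bar> \<le> real d * (2 * real d + 1) * ((real d * (2 * real d + 1)) ^ t * e)"
      by (rule phi2_lip[OF s0 s1 Suc e' j])
    then show "\<bar>(phi d P0 P1 \<alpha> ^^ Suc t) m j - (phi d P0 P1 \<alpha> ^^ Suc t) m' j\<bar> \<le> (real d * (2 * real d + 1)) ^ Suc t * e"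
      using phi_eq_phi2[OF x a] phi_eq_phi2[OF y a] by (simp add: mult.assoc)
  qed
qed

lemma psi_diff: "psi d P0 P1 \<alpha> s m j - psi d P0 P1 \<alpha> s m' j = Lin d P0 P1 s (\<lambda>i. m i - m' i) j"
  unfolding psi_def Lin_def by (simp add: sum_subtractf algebra_simps)

lemma Lin_add: "Lin d P0 P1 s (\<lambda>i. u i + v i) j = Lin d P0 P1 s u j + Lin d P0 P1 s v j"
  unfolding Lin_def by (simp add: sum.distrib algebra_simps)

lemma Lin_scale: "Lin d P0 P1 s (\<lambda>i. c * u i) j = c * Lin d P0 P1 s u j"
  unfolding Lin_def by (simp add: sum_distrib_left algebra_simps)

lemma Lin_cong: "s \<in> {1..d} \<Longrightarrow> \<forall>i\<in>{1..d}. u i = v i \<Longrightarrow> Lin d P0 P1 s u = Lin d P0 P1 s v"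
  unfolding Lin_def by (intro ext) (auto intro!: sum.cong arg_cong2[where f="(+)"] arg_cong2[where f="(-)"])

lemma sum_abs_bound:
  fixes u :: "nat \<Rightarrow> real"
  assumes "A \<subseteq> {1..d}" "\<forall>i\<in>{1..d}. \<bar>u i\<bar> \<le> e" "\<forall>i\<in>{1..d}. 0 \<le> c i \<and> c i \<le> 1" "0 \<le> e"
  shows "\<bar>\<Sum>i\<in>A. u i * c i\<bar> \<le> real d * e"
proof -
  have fA: "finite A" using assms(1) finite_subset by blast
  have "\<bar>\<Sum>i\<in>A. u i * c i\<bar> \<le> (\<Sum>i\<in>A. \<bar>u i * c i\<bar>)" by (rule sum_abs)
  also have "\<dots> \<le> (\<Sum>i\<in>A. e)"
  proof (rule sum_mono)
    fix i assume "i \<in> A"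
    then have "\<bar>u i\<bar> \<le> e" "0 \<le> c i" "c i \<le> 1" using assms by auto
    then show "\<bar>u i * c i\<bar> \<le> e" by (simp add: abs_mult) (metis abs_ge_zero mult_left_le order_trans)
  qed
  also have "\<dots> = card A * e" by simp
  also have "\<dots> \<le> real d * e"
  proof -
    have "card A \<le> d" using card_mono[OF _ assms(1)] by simp
    then show ?thesis using assms(4) by (intro mult_right_mono) auto
  qed
  finally show ?thesis .
qed

lemma Lin_bnd:
  assumes s0: "stochastic d P0" and s1: "stochastic d P1" and s: "s \<in> {1..d}"
    and b: "\<forall>i\<in>{1..d}. \<bar>u i\<bar> \<le> e" and e: "0 \<le> e" and j: "j \<in> {1..d}"
  shows "\<bar>Lin d P0 P1 s u j\<bar> \<le> 4 * real d * e"
proof -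
  have c1: "\<forall>i\<in>{1..d}. 0 \<le> P1 i j \<and> P1 i j \<le> 1" using s1 j by (auto intro: stoch_nn stoch_le1)
  have c0: "\<forall>i\<in>{1..d}. 0 \<le> P0 i j \<and> P0 i j \<le> 1" using s0 j by (auto intro: stoch_nn stoch_le1)
  have cc: "\<forall>i\<in>{1..d}. 0 \<le> (1::real) \<and> (1::real) \<le> 1" by simp
  have t1: "\<bar>\<Sum>i\<in>{1..<s}. u i * P1 i j\<bar> \<le> real d * e" using s b c1 e by (intro sum_abs_bound) auto
  have t4: "\<bar>\<Sum>i\<in>{s<..d}. u i * P0 i j\<bar> \<le> real d * e" using s b c0 e by (intro sum_abs_bound) auto
  have a2: "\<bar>\<Sum>i\<in>{1..<s}. u i * 1\<bar> \<le> real d * e" using s b cc e by (intro sum_abs_bound) auto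
  have a3: "\<bar>\<Sum>i\<in>{1..s}. u i * 1\<bar> \<le> real d * e" using s b cc e by (intro sum_abs_bound) auto
  have p: "0 \<le> P1 s j" "P1 s j \<le> 1" "0 \<le> P0 s j" "P0 s j \<le> 1" using c0 c1 s by auto
  have t2: "\<bar>(\<Sum>i\<in>{1..<s}. u i) * P1 s j\<bar> \<le> real d * e"
    using a2 p by (simp add: abs_mult) (metis abs_ge_zero mult_left_le order_trans)
  have t3: "\<bar>(\<Sum>i\<in>{1..s}. u i) * P0 s j\<bar> \<le> real d * e"
    using a3 p by (simp add: abs_mult) (metis abs_ge_zero mult_left_le order_trans)
  show ?thesis unfolding Lin_def using t1 t2 t3 t4 by linarith
qed

lemma phi_psi: "s_of d \<alpha> m = s \<Longrightarrow> phi d P0 P1 \<alpha> m j = psi d P0 P1 \<alpha> s m j"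
  unfolding phi_def psi_def Let_def by simp

lemma psi_bnd:
  assumes s0: "stochastic d P0" and s1: "stochastic d P1" and s: "s \<in> {1..d}"
    and m: "m \<in> simplex_d d" and a: "0 < \<alpha>" "\<alpha> < 1" and j: "j \<in> {1..d}"
  shows "\<bar>psi d P0 P1 \<alpha> s m j\<bar> \<le> 6"
proof -
  have b: "\<forall>i\<in>{1..d}. \<bar>m i\<bar> \<le> 1" using m by (auto simp: simplex_d_def)
  have nn: "\<forall>i\<in>{1..d}. 0 \<le> m i" using m by (auto simp: simplex_d_def)
  have sum1: "(\<Sum>i\<in>{1..d}. m i) = 1" using m by (auto simp: simplex_d_def)
  have c1: "\<forall>i\<in>{1..d}. 0 \<le> P1 i j \<and> P1 i j \<le> 1" using s1 j by (auto intro: stoch_nn stoch_le1)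
  have c0: "\<forall>i\<in>{1..d}. 0 \<le> P0 i j \<and> P0 i j \<le> 1" using s0 j by (auto intro: stoch_nn stoch_le1)
  have bs: "0 \<le> (\<Sum>i\<in>A. m i) \<and> (\<Sum>i\<in>A. m i) \<le> 1" if "A \<subseteq> {1..d}" for A
  proof -
    have "(\<Sum>i\<in>A. m i) \<le> (\<Sum>i\<in>{1..d}. m i)" using that nn by (intro sum_mono2) auto
    moreover have "0 \<le> (\<Sum>i\<in>A. m i)" using that nn by (intro sum_nonneg) auto
    ultimately show ?thesis using sum1 by simp
  qed
  have bw: "0 \<le> (\<Sum>i\<in>A. m i * c i) \<and> (\<Sum>i\<in>A. m i * c i) \<le> 1" if "A \<subseteq> {1..d}" "\<forall>i\<in>{1..d}. 0 \<le> c i \<and> c i \<le> 1" for A c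
  proof -
    have "(\<Sum>i\<in>A. m i * c i) \<le> (\<Sum>i\<in>A. m i)" using that nn by (intro sum_mono) (auto intro: mult_left_le)
    moreover have "0 \<le> (\<Sum>i\<in>A. m i * c i)" using that nn by (intro sum_nonneg) auto
    ultimately show ?thesis using bs[OF that(1)] by simp
  qed
  have t1: "0 \<le> (\<Sum>i\<in>{1..<s}. m i * P1 i j) \<and> (\<Sum>i\<in>{1..<s}. m i * P1 i j) \<le> 1" using s c1 by (intro bw) auto
  have t4: "0 \<le> (\<Sum>i\<in>{s<..d}. m i * P0 i j) \<and> (\<Sum>i\<in>{s<..d}. m i * P0 i j) \<le> 1" using s c0 by (intro bw) auto
  have u2: "0 \<le> (\<Sum>i\<in>{1..<s}. m i) \<and> (\<Sum>i\<in>{1..<s}. m i) \<le> 1" using s by (intro bs) auto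
  have u3: "0 \<le> (\<Sum>i\<in>{1..s}. m i) \<and> (\<Sum>i\<in>{1..s}. m i) \<le> 1" using s by (intro bs) auto
  have p: "0 \<le> P1 s j" "P1 s j \<le> 1" "0 \<le> P0 s j" "P0 s j \<le> 1" using c0 c1 s by auto
  have t2: "\<bar>(\<alpha> - (\<Sum>i\<in>{1..<s}. m i)) * P1 s j\<bar> \<le> 2"
  proof -
    have "\<bar>\<alpha> - (\<Sum>i\<in>{1..<s}. m i)\<bar> \<le> 2" using u2 a by linarith
    then show ?thesis using p by (simp add: abs_mult) (metis abs_ge_zero mult_left_le order_trans)
  qed
  have t3: "\<bar>((\<Sum>i\<in>{1..s}. m i) - \<alpha>) * P0 s j\<bar> \<le> 2"
  proof -
    have "\<bar>(\<Sum>i\<in>{1..s}. m i) - \<alpha>\<bar> \<le> 2" using u3 a by linarith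
    then show ?thesis using p by (simp add: abs_mult) (metis abs_ge_zero mult_left_le order_trans)
  qed
  show ?thesis unfolding psi_def using t1 t2 t3 t4 by linarith
qed

lemma nonsing_nbhd:
  assumes m0: "mstar \<in> simplex_d d" and ns: "\<not> singular d \<alpha> mstar" and a: "0 < \<alpha>" "\<alpha> < 1"
  shows "\<exists>\<rho>>0. \<forall>m\<in>simplex_d d. (\<forall>i\<in>{1..d}. \<bar>m i - mstar i\<bar> \<le> \<rho>) \<longrightarrow> s_of d \<alpha> m = s_of d \<alpha> mstar"
proof -
  define s where "s = s_of d \<alpha> mstar"
  have sp: "s \<in> {1..d}" "(\<Sum>i\<in>{1..<s}. mstar i) \<le> \<alpha>" "\<alpha> < (\<Sum>i\<in>{1..s}. mstar i)"
    using s_of_spec[OF m0 a] unfolding s_def by auto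
  have lt: "(\<Sum>i\<in>{1..<s}. mstar i) < \<alpha>"
  proof (cases "s = 1")
    case True then show ?thesis using a by simp
  next
    case False
    then have "s - 1 \<in> {1..d}" "{1..<s} = {1..s-1}" using sp by auto
    then show ?thesis using ns sp unfolding singular_def by (metis order_le_less)
  qed
  define g where "g = min (\<alpha> - (\<Sum>i\<in>{1..<s}. mstar i)) ((\<Sum>i\<in>{1..s}. mstar i) - \<alpha>)"
  have g: "0 < g" using lt sp unfolding g_def by simp
  define \<rho> where "\<rho> = g / (real d + 1)"
  have \<rho>: "0 < \<rho>" using g unfolding \<rho>_def by simp
  have d\<rho>: "real d * \<rho> < g" using g unfolding \<rho>_def by (simp add: field_simps)
  have "\<forall>m\<in>simplex_d d. (\<forall>i\<in>{1..d}. \<bar>m i - mstar i\<bar> \<le> \<rho>) \<longrightarrow> s_of d \<alpha> m = s"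
  proof (intro ballI impI)
    fix m assume m: "m \<in> simplex_d d" and b: "\<forall>i\<in>{1..d}. \<bar>m i - mstar i\<bar> \<le> \<rho>"
    have nn: "\<forall>i\<in>{1..d}. 0 \<le> m i" using m by (auto simp: simplex_d_def)
    have cl: "\<bar>(\<Sum>i\<in>A. m i) - (\<Sum>i\<in>A. mstar i)\<bar> \<le> real d * \<rho>" if "A \<subseteq> {1..d}" for A
    proof -
      have fA: "finite A" using that finite_subset by blast
      have "\<bar>(\<Sum>i\<in>A. m i) - (\<Sum>i\<in>A. mstar i)\<bar> \<le> card A * \<rho>" using b that fA by (intro sum_diff_bound) auto
      also have "\<dots> \<le> real d * \<rho>" using card_mono[OF _ that] \<rho> by (intro mult_right_mono) auto
      finally show ?thesis .
    qed
    have c1: "\<bar>(\<Sum>i\<in>{1..<s}. m i) - (\<Sum>i\<in>{1..<s}. mstar i)\<bar> \<le> real d * \<rho>" using sp by (intro cl) auto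
    have c2: "\<bar>(\<Sum>i\<in>{1..s}. m i) - (\<Sum>i\<in>{1..s}. mstar i)\<bar> \<le> real d * \<rho>" using sp by (intro cl) auto
    have "(\<Sum>i\<in>{1..<s}. m i) \<le> \<alpha>" "\<alpha> < (\<Sum>i\<in>{1..s}. m i)"
      using c1 c2 d\<rho> unfolding g_def by (auto simp: abs_le_iff)
    then show "s_of d \<alpha> m = s" using s_of_eq[OF nn sp(1)] by blast
  qed
  then show ?thesis using \<rho> unfolding s_def by blast
qed




lemma Lin_pow_scale: "(Lin d P0 P1 s ^^ k) (\<lambda>i. c * u i) = (\<lambda>j. c * (Lin d P0 P1 s ^^ k) u j)"
proof (induction k)
  case (Suc k)
  show ?case by (simp add: Suc Lin_scale)
qed simp

lemma Lin_pow_add: "(Lin d P0 P1 s ^^ k) (\<lambda>i. u i + v i) = (\<lambda>j. (Lin d P0 P1 s ^^ k) u j + (Lin d P0 P1 s ^^ k) v j)"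
proof (induction k)
  case (Suc k)
  show ?case by (simp add: Suc Lin_add)
qed simp

lemma Lin_pow_cong:
  assumes s: "s \<in> {1..d}" and h: "\<forall>i\<in>{1..d}. u i = v i"
  shows "\<forall>j\<in>{1..d}. (Lin d P0 P1 s ^^ k) u j = (Lin d P0 P1 s ^^ k) v j"
proof (induction k)
  case 0 then show ?case using h by simp
next
  case (Suc k)
  then show ?case using Lin_cong[OF s Suc] by simp
qed

lemma Lin_pow_bnd:
  assumes s0: "stochastic d P0" and s1: "stochastic d P1" and s: "s \<in> {1..d}"
    and b: "\<forall>i\<in>{1..d}. \<bar>u i\<bar> \<le> e" and e: "0 \<le> e"
  shows "\<forall>j\<in>{1..d}. \<bar>(Lin d P0 P1 s ^^ k) u j\<bar> \<le> (4 * real d) ^ k * e"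
proof (induction k)
  case 0 then show ?case using b by simp
next
  case (Suc k)
  have e': "0 \<le> (4 * real d) ^ k * e" using e by simp
  show ?case using Lin_bnd[OF s0 s1 s Suc e'] by (simp add: mult.assoc)
qed

lemma pos_lower_bound:
  fixes f :: "nat \<Rightarrow> real"
  shows "\<exists>r>0. \<forall>i\<in>{1..d}. 0 < f i \<longrightarrow> r \<le> f i"
proof -
  define S where "S = insert 1 (f ` {i\<in>{1..d}. 0 < f i})"
  have fS: "finite S" "S \<noteq> {}" unfolding S_def by auto
  have pos: "0 < Min S" using fS by (subst Min_gr_iff) (auto simp: S_def)
  have "\<forall>i\<in>{1..d}. 0 < f i \<longrightarrow> Min S \<le> f i" using fS by (auto simp: S_def intro: Min_le)
  then show ?thesis using pos by blast
qed

lemma local_contraction: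
  assumes d: "d \<ge> 1" and s0: "stochastic d P0" and s1: "stochastic d P1"
    and a: "0 < \<alpha>" "\<alpha> < 1"
    and m0: "mstar \<in> simplex_d d"
    and fix0: "\<forall>j\<in>{1..d}. phi d P0 P1 \<alpha> mstar j = mstar j"
    and att: "uniform_global_attractor d (phi d P0 P1 \<alpha>) mstar"
    and ns: "\<not> singular d \<alpha> mstar"
  shows "\<exists>k. \<forall>(w::nat\<Rightarrow>real) (e::real). (\<forall>i\<in>{1..d}. mstar i = 0 \<longrightarrow> 0 \<le> w i) \<longrightarrow> (\<Sum>i=1..d. w i) = 0
      \<longrightarrow> (\<forall>i\<in>{1..d}. \<bar>w i\<bar> \<le> e) \<longrightarrow> 0 < e
      \<longrightarrow> (\<forall>j\<in>{1..d}. \<bar>(Lin d P0 P1 (s_of d \<alpha> mstar) ^^ k) w j\<bar> \<le> e / 2)"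
proof -
  define s where "s = s_of d \<alpha> mstar"
  define L where "L = Lin d P0 P1 s"
  define \<Phi> where "\<Phi> = phi d P0 P1 \<alpha>"
  have sd: "s \<in> {1..d}" using s_of_spec[OF m0 a] unfolding s_def by auto
  obtain \<rho> where \<rho>: "\<rho> > 0" and nb: "\<forall>m\<in>simplex_d d. (\<forall>i\<in>{1..d}. \<bar>m i - mstar i\<bar> \<le> \<rho>) \<longrightarrow> s_of d \<alpha> m = s"
    using nonsing_nbhd[OF m0 ns a] unfolding s_def by blast
  obtain T0 where T0: "\<forall>t\<ge>T0. \<forall>m\<in>simplex_d d. \<forall>i\<in>{1..d}. \<bar>(\<Phi> ^^ t) m i - mstar i\<bar> \<le> \<rho> / 2"
    using att \<rho> unfolding uniform_global_attractor_def \<Phi>_def by (meson half_gt_zero)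
  define K where "K = 4 * real d"
  have K1: "1 \<le> K" using d unfolding K_def by simp
  obtain r0 where r0: "r0 > 0" "\<forall>i\<in>{1..d}. 0 < mstar i \<longrightarrow> r0 \<le> mstar i"
    using pos_lower_bound by blast
  define \<rho>2 where "\<rho>2 = min r0 (\<rho> / (2 * K ^ T0))"
  have \<rho>2: "0 < \<rho>2" "\<rho>2 \<le> r0" "K ^ T0 * \<rho>2 \<le> \<rho> / 2"
    using r0 \<rho> K1 unfolding \<rho>2_def by (auto simp: field_simps min_def)
  obtain k where k: "\<forall>t\<ge>k. \<forall>m\<in>simplex_d d. \<forall>i\<in>{1..d}. \<bar>(\<Phi> ^^ t) m i - mstar i\<bar> \<le> \<rho>2 / 2"
    using att \<rho>2(1) unfolding uniform_global_attractor_def \<Phi>_def by (meson half_gt_zero)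
  have mnn: "\<forall>i\<in>{1..d}. 0 \<le> mstar i" using m0 by (auto simp: simplex_d_def)
  have claimA: "\<forall>j\<in>{1..d}. (\<Phi> ^^ t) (\<lambda>i. mstar i + v i) j = mstar j + (L ^^ t) v j"
    if y: "(\<lambda>i. mstar i + v i) \<in> simplex_d d" and vb: "\<forall>i\<in>{1..d}. \<bar>v i\<bar> \<le> \<rho>2" for v t
  proof (induction t)
    case 0 then show ?case by simp
  next
    case (Suc t)
    let ?y = "\<lambda>i. mstar i + v i"
    let ?x = "(\<Phi> ^^ t) ?y"
    have xs: "?x \<in> simplex_d d" using iter_simplex[OF s0 s1 y a] unfolding \<Phi>_def .
    have bt: "\<forall>i\<in>{1..d}. \<bar>(L ^^ t) v i\<bar> \<le> \<rho>"
    proof (cases "t < T0")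
      case True
      have "\<forall>i\<in>{1..d}. \<bar>(L ^^ t) v i\<bar> \<le> K ^ t * \<rho>2"
        using Lin_pow_bnd[OF s0 s1 sd vb] \<rho>2(1) unfolding L_def K_def by auto
      moreover have "K ^ t * \<rho>2 \<le> K ^ T0 * \<rho>2"
        using True K1 \<rho>2(1) by (intro mult_right_mono power_increasing) auto
      ultimately show ?thesis using \<rho>2(3) \<rho> by fastforce
    next
      case False
      then have "\<forall>i\<in>{1..d}. \<bar>?x i - mstar i\<bar> \<le> \<rho> / 2" using T0 y by auto
      then show ?thesis using Suc \<rho> by auto
    qed
    have sx: "s_of d \<alpha> ?x = s"
      using nb xs Suc bt by auto
    show ?case
    proof
      fix j assume j: "j \<in> {1..d}"
      have "(\<Phi> ^^ Suc t) ?y j = psi d P0 P1 \<alpha> s ?x j"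
        using phi_psi[OF sx] unfolding \<Phi>_def by simp
      also have "\<dots> = psi d P0 P1 \<alpha> s mstar j + L (\<lambda>i. ?x i - mstar i) j"
        using psi_diff[of d P0 P1 \<alpha> s ?x j mstar] unfolding L_def by simp
      also have "psi d P0 P1 \<alpha> s mstar j = mstar j"
        using phi_psi[of d \<alpha> mstar s] fix0 j unfolding s_def by auto
      also have "L (\<lambda>i. ?x i - mstar i) = L ((L ^^ t) v)"
        using Suc unfolding L_def by (intro Lin_cong[OF sd]) auto
      finally show "(\<Phi> ^^ Suc t) ?y j = mstar j + (L ^^ Suc t) v j" by simp
    qed
  qed
  have "\<forall>(w::nat\<Rightarrow>real) (e::real). (\<forall>i\<in>{1..d}. mstar i = 0 \<longrightarrow> 0 \<le> w i) \<longrightarrow> (\<Sum>i=1..d. w i) = 0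
      \<longrightarrow> (\<forall>i\<in>{1..d}. \<bar>w i\<bar> \<le> e) \<longrightarrow> 0 < e
      \<longrightarrow> (\<forall>j\<in>{1..d}. \<bar>(L ^^ k) w j\<bar> \<le> e / 2)"
  proof (intro allI impI)
    fix w :: "nat \<Rightarrow> real" and e :: real assume cone: "\<forall>i\<in>{1..d}. mstar i = 0 \<longrightarrow> 0 \<le> w i" and ws: "(\<Sum>i=1..d. w i) = 0"
      and wb: "\<forall>i\<in>{1..d}. \<bar>w i\<bar> \<le> e" and e: "0 < e"
    define c where "c = \<rho>2 / e"
    have c: "0 < c" using \<rho>2 e unfolding c_def by simp
    define v where "v = (\<lambda>i. c * w i)"
    have vb: "\<forall>i\<in>{1..d}. \<bar>v i\<bar> \<le> \<rho>2"
    proof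
      fix i assume i: "i \<in> {1..d}"
      have "\<bar>v i\<bar> = c * \<bar>w i\<bar>" using c by (simp add: v_def abs_mult)
      also have "\<dots> \<le> c * e" using wb i c by (intro mult_left_mono) auto
      also have "\<dots> = \<rho>2" using e unfolding c_def by simp
      finally show "\<bar>v i\<bar> \<le> \<rho>2" .
    qed
    have ynn: "0 \<le> mstar i + v i" if i: "i \<in> {1..d}" for i
    proof (cases "mstar i = 0")
      case True then show ?thesis using cone i c by (simp add: v_def)
    next
      case False
      then have "r0 \<le> mstar i" using r0 mnn i by force
      moreover have "\<bar>v i\<bar> \<le> \<rho>2" using vb i by blast
      ultimately show ?thesis using \<rho>2 by (auto simp: abs_le_iff)
    qed
    have ysum: "(\<Sum>i=1..d. mstar i + v i) = 1"
      using m0 ws by (simp add: sum.distrib simplex_d_def v_def sum_distrib_left[symmetric])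
    have yle: "mstar i + v i \<le> 1" if i: "i \<in> {1..d}" for i
    proof -
      have "mstar i + v i \<le> (\<Sum>i=1..d. mstar i + v i)" using ynn i by (intro member_le_sum) auto
      then show ?thesis using ysum by simp
    qed
    have y: "(\<lambda>i. mstar i + v i) \<in> simplex_d d" using ynn yle ysum by (auto simp: simplex_d_def)
    have A: "\<forall>j\<in>{1..d}. (\<Phi> ^^ k) (\<lambda>i. mstar i + v i) j = mstar j + (L ^^ k) v j" by (rule claimA[OF y vb])
    have Lv: "(L ^^ k) v = (\<lambda>j. c * (L ^^ k) w j)" unfolding v_def L_def by (rule Lin_pow_scale)
    show "\<forall>j\<in>{1..d}. \<bar>(L ^^ k) w j\<bar> \<le> e / 2"
    proof
      fix j assume j: "j \<in> {1..d}"
      have "\<bar>c * (L ^^ k) w j\<bar> \<le> \<rho>2 / 2" using k y j A Lv by fastforce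
      then have "c * \<bar>(L ^^ k) w j\<bar> \<le> \<rho>2 / 2" using c by (simp add: abs_mult)
      then show "\<bar>(L ^^ k) w j\<bar> \<le> e / 2" using c e unfolding c_def by (simp add: field_simps)
    qed
  qed
  then show ?thesis unfolding L_def s_def by blast
qed




lemma exp_quad:
  fixes x :: real assumes "\<bar>x\<bar> \<le> 1" shows "exp x \<le> 1 + x + x^2"
proof (cases "0 \<le> x")
  case True then show ?thesis using exp_bound[of x] assms by simp
next
  case False
  have p: "0 < 1 - x" using False by simp
  have "1 - x \<le> exp (- x)" using exp_ge_add_one_self[of "-x"] by simp
  then have "exp x \<le> 1 / (1 - x)" using p by (simp add: exp_minus field_simps)
  also have "\<dots> \<le> 1 + x + x^2"
  proof -
    have e: "(1 - x) * (1 + x + x^2) = 1 - x * x^2" by (simp add: algebra_simps power2_eq_square)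
    have "x * x^2 \<le> 0" using False by (intro mult_nonpos_nonneg) auto
    then have "1 \<le> (1 - x) * (1 + x + x^2)" unfolding e by simp
    then show ?thesis using p by (simp add: field_simps)
  qed
  finally show ?thesis .
qed

lemma bern_mgf:
  fixes q l :: real assumes "0 \<le> q" "q \<le> 1" "\<bar>l\<bar> \<le> 1"
  shows "1 + (exp l - 1) * q \<le> exp (l * q + l^2)"
proof -
  have "(exp l - 1) * q \<le> (l + l^2) * q" using exp_quad[OF assms(3)] assms by (intro mult_right_mono) auto
  also have "\<dots> \<le> l * q + l^2"
  proof -
    have "q * l^2 \<le> l^2" using assms by (intro mult_left_le_one_le) auto
    then show ?thesis by (simp add: algebra_simps)
  qed
  finally have "1 + (exp l - 1) * q \<le> 1 + (l * q + l^2)" by simp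
  also have "\<dots> \<le> exp (l * q + l^2)" by (rule exp_ge_add_one_self)
  finally show ?thesis .
qed

lemma exp_bind_pmf:
  fixes h :: "'b \<Rightarrow> real"
  assumes "finite (set_pmf p)" "\<And>x. x \<in> set_pmf p \<Longrightarrow> finite (set_pmf (f x))"
  shows "measure_pmf.expectation (bind_pmf p f) h = measure_pmf.expectation p (\<lambda>x. measure_pmf.expectation (f x) h)"
proof -
  have "measure_pmf.expectation (bind_pmf p f) h = (\<Sum>a\<in>set_pmf p. pmf p a *\<^sub>R measure_pmf.expectation (f a) h)"
    using assms by (intro pmf_expectation_bind) auto
  also have "\<dots> = measure_pmf.expectation p (\<lambda>x. measure_pmf.expectation (f x) h)"
    using assms by (subst integral_measure_pmf[of "set_pmf p"]) auto
  finally show ?thesis .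
qed

lemma exp_mono_pmf:
  fixes F G :: "'a \<Rightarrow> real"
  assumes "finite (set_pmf p)" "\<And>x. x \<in> set_pmf p \<Longrightarrow> F x \<le> G x"
  shows "measure_pmf.expectation p F \<le> measure_pmf.expectation p G"
  using assms by (intro integral_mono_AE) (auto simp: AE_measure_pmf_iff intro: integrable_measure_pmf_finite)

lemma exp_cong_pmf:
  fixes F G :: "'a \<Rightarrow> real"
  assumes "\<And>x. x \<in> set_pmf p \<Longrightarrow> F x = G x"
  shows "measure_pmf.expectation p F = measure_pmf.expectation p G"
  using assms by (intro integral_cong_AE) (auto simp: AE_measure_pmf_iff)

lemma exp_add_pmf:
  fixes F G :: "'a \<Rightarrow> real"
  assumes "finite (set_pmf p)"
  shows "measure_pmf.expectation p (\<lambda>x. F x + G x) = measure_pmf.expectation p F + measure_pmf.expectation p G"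
  using assms by (intro Bochner_Integration.integral_add) (auto intro: integrable_measure_pmf_finite)

lemma exp_const_pmf: "measure_pmf.expectation p (\<lambda>x. c) = (c::real)"
  by simp

definition SG :: "(nat \<Rightarrow> nat) pmf \<Rightarrow> nat \<Rightarrow> real \<Rightarrow> real \<Rightarrow> bool" where
  "SG q j \<mu> k \<longleftrightarrow> finite (set_pmf q) \<and> measure_pmf.expectation q (\<lambda>x. real (x j)) = \<mu> \<and>
     (\<forall>l. \<bar>l\<bar> \<le> 1 \<longrightarrow> measure_pmf.expectation q (\<lambda>x. exp (l * real (x j))) \<le> exp (l * \<mu> + k * l^2))"

lemma SG_return: "SG (return_pmf (\<lambda>_. 0)) j 0 0"
  by (simp add: SG_def)

lemma finite_add_counts: "finite (set_pmf p) \<Longrightarrow> finite (set_pmf q) \<Longrightarrow> finite (set_pmf (add_counts p q))"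
  unfolding add_counts_def by (simp)

lemma SG_add:
  assumes p: "SG p j \<mu>1 k1" and q: "SG q j \<mu>2 k2"
  shows "SG (add_counts p q) j (\<mu>1 + \<mu>2) (k1 + k2)"
proof -
  have fp: "finite (set_pmf p)" and fq: "finite (set_pmf q)" using p q by (auto simp: SG_def)
  have fm: "finite (set_pmf (map_pmf (\<lambda>y j. x j + y j) q))" for x using fq by simp
  have E: "measure_pmf.expectation (add_counts p q) h
      = measure_pmf.expectation p (\<lambda>x. measure_pmf.expectation q (\<lambda>y. h (\<lambda>j. x j + y j)))" for h :: "_ \<Rightarrow> real"
    unfolding add_counts_def using fp fm by (subst exp_bind_pmf) auto
  have e1: "measure_pmf.expectation (add_counts p q) (\<lambda>x. real (x j)) = \<mu>1 + \<mu>2"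
  proof -
    have "measure_pmf.expectation (add_counts p q) (\<lambda>x. real (x j))
        = measure_pmf.expectation p (\<lambda>x. real (x j) + measure_pmf.expectation q (\<lambda>y. real (y j)))"
      unfolding E using fq by (intro exp_cong_pmf) (simp add: exp_add_pmf)
    also have "\<dots> = \<mu>1 + \<mu>2" using p q fp by (simp add: SG_def exp_add_pmf)
    finally show ?thesis .
  qed
  have e2: "measure_pmf.expectation (add_counts p q) (\<lambda>x. exp (l * real (x j))) \<le> exp (l * (\<mu>1 + \<mu>2) + (k1 + k2) * l^2)"
    if l: "\<bar>l\<bar> \<le> 1" for l
  proof -
    let ?C = "measure_pmf.expectation q (\<lambda>y. exp (l * real (y j)))"
    have C: "?C \<le> exp (l * \<mu>2 + k2 * l^2)" using q l by (auto simp: SG_def)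
    have "measure_pmf.expectation (add_counts p q) (\<lambda>x. exp (l * real (x j)))
        = measure_pmf.expectation p (\<lambda>x. exp (l * real (x j)) * ?C)"
      unfolding E by (intro exp_cong_pmf) (simp add: distrib_left exp_add)
    also have "\<dots> \<le> measure_pmf.expectation p (\<lambda>x. exp (l * real (x j)) * exp (l * \<mu>2 + k2 * l^2))"
      using fp C by (intro exp_mono_pmf mult_left_mono) auto
    also have "\<dots> = measure_pmf.expectation p (\<lambda>x. exp (l * real (x j))) * exp (l * \<mu>2 + k2 * l^2)"
      by simp
    also have "\<dots> \<le> exp (l * \<mu>1 + k1 * l^2) * exp (l * \<mu>2 + k2 * l^2)"
      using p l by (intro mult_right_mono) (auto simp: SG_def)
    also have "\<dots> = exp (l * (\<mu>1 + \<mu>2) + (k1 + k2) * l^2)" by (simp add: exp_add[symmetric] algebra_simps)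
    finally show ?thesis .
  qed
  show ?thesis using e1 e2 fp fq by (simp add: SG_def finite_add_counts)
qed




lemma row_pmf_props:
  assumes P: "stochastic d P" and i: "i \<in> {1..d}"
  shows "pmf (row_pmf d P i) j = (if j \<in> {1..d} then P i j else 0)"
    and "set_pmf (row_pmf d P i) \<subseteq> {1..d}"
proof -
  let ?f = "\<lambda>j. if j \<in> {1..d} then P i j else 0"
  have nn: "\<forall>x. 0 \<le> ?f x" using P i by (auto simp: stochastic_def)
  have nn': "\<forall>a\<in>{1..d}. 0 \<le> P i a" using P i by (auto simp: stochastic_def)
  have e1: "(\<integral>\<^sup>+x. ennreal (?f x) \<partial>count_space UNIV) = (\<Sum>a\<in>{1..d}. ennreal (?f a))"
    by (rule nn_integral_count_space') auto
  have e2: "(\<Sum>a\<in>{1..d}. ennreal (?f a)) = ennreal (\<Sum>a\<in>{1..d}. ?f a)" by (intro sum_ennreal) (use nn' in auto)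
  have e3: "(\<Sum>a\<in>{1..d}. ?f a) = 1" using P i by (auto simp: stochastic_def)
  have int: "(\<integral>\<^sup>+x. ennreal (?f x) \<partial>count_space UNIV) = 1" using e1 e2 e3 by simp
  have pm: "pmf (row_pmf d P i) j = ?f j" for j
    unfolding row_pmf_def by (rule pmf_embed_pmf) (use nn int in auto)
  then show "pmf (row_pmf d P i) j = (if j \<in> {1..d} then P i j else 0)" .
  show "set_pmf (row_pmf d P i) \<subseteq> {1..d}"
    using pm by (auto simp: set_pmf_eq split: if_splits)
qed

lemma sample_Suc:
  "sample_counts (Suc k) p = add_counts (sample_counts k p) (map_pmf (\<lambda>j' z. if z = j' then 1 else 0) p)"
proof -
  have "(\<lambda>j'. c(j' := c j' + 1)) = (\<lambda>j'. (\<lambda>j. c j + (if j = j' then 1 else 0)))" for c :: "nat \<Rightarrow> nat"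
    by (intro ext) auto
  then show ?thesis unfolding add_counts_def by (simp add: map_pmf_comp)
qed

lemma SG_eq: "SG q j \<mu> k \<Longrightarrow> \<mu> = \<mu>' \<Longrightarrow> k = k' \<Longrightarrow> SG q j \<mu>' k'"
  by simp

lemma SG_single:
  assumes fp: "finite (set_pmf p)"
  shows "SG (map_pmf (\<lambda>j' z. if z = j' then 1 else 0) p) j (pmf p j) 1"
proof -
  have e1: "measure_pmf.expectation (map_pmf (\<lambda>j' z. if z = j' then 1 else 0) p) (\<lambda>x. real (x j)) = pmf p j"
  proof -
    have "measure_pmf.expectation (map_pmf (\<lambda>j' z. if z = j' then 1 else 0) p) (\<lambda>x. real (x j))
      = measure_pmf.expectation p (indicator {j})" unfolding integral_map_pmf by (intro exp_cong_pmf) (auto simp: indicator_def)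
    also have "\<dots> = pmf p j" by (simp add: measure_pmf_single)
    finally show ?thesis .
  qed
  have e2: "measure_pmf.expectation (map_pmf (\<lambda>j' z. if z = j' then 1 else 0) p) (\<lambda>x. exp (l * real (x j)))
       \<le> exp (l * pmf p j + 1 * l^2)" if l: "\<bar>l\<bar> \<le> 1" for l
  proof -
    have "measure_pmf.expectation (map_pmf (\<lambda>j' z. if z = j' then 1 else 0) p) (\<lambda>x. exp (l * real (x j)))
      = measure_pmf.expectation p (\<lambda>x. 1 + (exp l - 1) * indicator {j} x)"
      unfolding integral_map_pmf by (intro exp_cong_pmf) (auto simp: indicator_def)
    also have "\<dots> = 1 + (exp l - 1) * pmf p j" using fp by (simp add: exp_add_pmf measure_pmf_single)
    also have "\<dots> \<le> exp (l * pmf p j + l^2)" using l by (intro bern_mgf) (auto simp: pmf_le_1)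
    finally show ?thesis by simp
  qed
  show ?thesis using e1 e2 fp by (simp add: SG_def)
qed

lemma SG_sample:
  assumes fp: "finite (set_pmf p)"
  shows "SG (sample_counts k p) j (real k * pmf p j) (real k)"
proof (induction k)
  case 0 then show ?case using SG_return by simp
next
  case (Suc k)
  have "SG (sample_counts (Suc k) p) j (real k * pmf p j + pmf p j) (real k + 1)"
    unfolding sample_Suc by (rule SG_add[OF Suc SG_single[OF fp]])
  then show ?case by (rule SG_eq) (auto simp: algebra_simps)
qed

definition supp_ok :: "nat \<Rightarrow> (nat \<Rightarrow> nat) pmf \<Rightarrow> nat \<Rightarrow> bool" where
  "supp_ok d q K \<longleftrightarrow> (\<forall>x\<in>set_pmf q. (\<forall>i. i \<notin> {1..d} \<longrightarrow> x i = 0) \<and> (\<Sum>i=1..d. x i) = K)"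

lemma supp_add: "supp_ok d p K1 \<Longrightarrow> supp_ok d q K2 \<Longrightarrow> supp_ok d (add_counts p q) (K1 + K2)"
  unfolding supp_ok_def add_counts_def by (auto simp: sum.distrib)

lemma supp_sample:
  assumes "set_pmf p \<subseteq> {1..d}"
  shows "supp_ok d (sample_counts k p) k"
proof (induction k)
  case 0 then show ?case by (simp add: supp_ok_def)
next
  case (Suc k)
  have s1: "supp_ok d (map_pmf (\<lambda>j' z. if z = j' then 1 else 0) p) 1"
    using assms unfolding supp_ok_def by (auto simp: sum.delta)
  show ?case unfolding sample_Suc using supp_add[OF Suc s1] by simp
qed

lemma finite_sample: "finite (set_pmf p) \<Longrightarrow> finite (set_pmf (sample_counts k p))"
  using SG_sample[of p k 0] by (simp add: SG_def)




lemma na_le: "n_active A n i \<le> n i"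
  by (simp add: n_active_def)

lemma fold_SG:
  assumes s0: "stochastic d P0" and s1: "stochastic d P1" and j: "j \<in> {1..d}"
  shows "set xs \<subseteq> {1..d} \<Longrightarrow> SG (foldr (\<lambda>i acc. add_counts acc
       (add_counts (sample_counts (n_active A n i) (row_pmf d P1 i))
                   (sample_counts (n i - n_active A n i) (row_pmf d P0 i)))) xs (return_pmf (\<lambda>_. 0))) j
     (\<Sum>i\<leftarrow>xs. real (n_active A n i) * P1 i j + real (n i - n_active A n i) * P0 i j)
     (\<Sum>i\<leftarrow>xs. real (n i))"
proof (induction xs)
  case Nil then show ?case using SG_return by simp
next
  case (Cons i xs)
  have i: "i \<in> {1..d}" and xs: "set xs \<subseteq> {1..d}" using Cons by auto
  have f1: "finite (set_pmf (row_pmf d P1 i))" using row_pmf_props(2)[OF s1 i] finite_subset by blast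
  have f0: "finite (set_pmf (row_pmf d P0 i))" using row_pmf_props(2)[OF s0 i] finite_subset by blast
  have p1: "pmf (row_pmf d P1 i) j = P1 i j" using row_pmf_props(1)[OF s1 i] j by simp
  have p0: "pmf (row_pmf d P0 i) j = P0 i j" using row_pmf_props(1)[OF s0 i] j by simp
  have A: "SG (sample_counts (n_active A n i) (row_pmf d P1 i)) j (real (n_active A n i) * P1 i j) (real (n_active A n i))"
    using SG_sample[OF f1, of "n_active A n i" j] p1 by simp
  have B: "SG (sample_counts (n i - n_active A n i) (row_pmf d P0 i)) j (real (n i - n_active A n i) * P0 i j) (real (n i - n_active A n i))"
    using SG_sample[OF f0, of "n i - n_active A n i" j] p0 by simp
  have k: "real (n_active A n i) + real (n i - n_active A n i) = real (n i)"
    using na_le[of A n i] by simp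
  note C = SG_add[OF Cons.IH[OF xs] SG_add[OF A B]]
  have e: "\<And>F z. foldr F (i#xs) z = F i (foldr F xs z)" by simp
  show ?case
    apply (subst e)
    apply (rule SG_eq[OF C])
    subgoal by (simp only: list.map sum_list.Cons add.commute)
    subgoal using k by simp
    done
qed

lemma fold_supp:
  assumes s0: "stochastic d P0" and s1: "stochastic d P1"
  shows "set xs \<subseteq> {1..d} \<Longrightarrow> supp_ok d (foldr (\<lambda>i acc. add_counts acc
       (add_counts (sample_counts (n_active A n i) (row_pmf d P1 i))
                   (sample_counts (n i - n_active A n i) (row_pmf d P0 i)))) xs (return_pmf (\<lambda>_. 0)))
     (\<Sum>i\<leftarrow>xs. n i)"
proof (induction xs)
  case Nil then show ?case by (simp add: supp_ok_def)
next
  case (Cons i xs)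
  have i: "i \<in> {1..d}" and xs: "set xs \<subseteq> {1..d}" using Cons by auto
  have A: "supp_ok d (sample_counts (n_active A n i) (row_pmf d P1 i)) (n_active A n i)"
    using supp_sample[OF row_pmf_props(2)[OF s1 i]] .
  have B: "supp_ok d (sample_counts (n i - n_active A n i) (row_pmf d P0 i)) (n i - n_active A n i)"
    using supp_sample[OF row_pmf_props(2)[OF s0 i]] .
  have k: "n_active A n i + (n i - n_active A n i) = n i"
    using na_le[of A n i] by simp
  note C = supp_add[OF Cons.IH[OF xs] supp_add[OF A B]]
  have e: "\<And>F z. foldr F (i#xs) z = F i (foldr F xs z)" by simp
  show ?case
    apply (subst e)
    apply (simp only: list.map sum_list.Cons)
    using C k by (simp add: add.commute)
qed

lemma upt_set: "set [1..<d+1] = {1..d}" by auto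

lemma wip_SG:
  assumes s0: "stochastic d P0" and s1: "stochastic d P1" and j: "j \<in> {1..d}"
  shows "SG (wip_step d P0 P1 A n) j
     (\<Sum>i=1..d. real (n_active A n i) * P1 i j + real (n i - n_active A n i) * P0 i j)
     (\<Sum>i=1..d. real (n i))"
proof -
  have "SG (wip_step d P0 P1 A n) j
     (\<Sum>i\<leftarrow>[1..<d+1]. real (n_active A n i) * P1 i j + real (n i - n_active A n i) * P0 i j)
     (\<Sum>i\<leftarrow>[1..<d+1]. real (n i))"
    unfolding wip_step_def by (rule fold_SG[OF s0 s1 j]) auto
  then show ?thesis
    by (simp only: sum_set_upt_conv_sum_list_nat[symmetric] upt_set)
qed

lemma wip_supp:
  assumes s0: "stochastic d P0" and s1: "stochastic d P1"
  shows "supp_ok d (wip_step d P0 P1 A n) (\<Sum>i=1..d. n i)"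
proof -
  have "supp_ok d (wip_step d P0 P1 A n) (\<Sum>i\<leftarrow>[1..<d+1]. n i)"
    unfolding wip_step_def by (rule fold_supp[OF s0 s1]) auto
  then show ?thesis
    by (simp only: sum_set_upt_conv_sum_list_nat[symmetric] upt_set)
qed




lemma frac_simplex:
  assumes N: "N > 0" and n: "n \<in> config_space d N"
  shows "frac N n \<in> simplex_d d"
proof -
  have sn: "(\<Sum>i=1..d. n i) = N" using n by (simp add: config_space_def)
  have le: "n i \<le> N" if "i \<in> {1..d}" for i
    using member_le_sum[of i "{1..d}" n] that sn by simp
  have "(\<Sum>i=1..d. frac N n i) = (\<Sum>i=1..d. real (n i)) / real N"
    unfolding frac_def by (simp add: sum_divide_distrib)
  also have "\<dots> = 1" using N sn by (simp flip: of_nat_sum)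
  finally show ?thesis using le N by (auto simp: simplex_d_def frac_def)
qed

lemma na_act:
  assumes N: "N > 0" and A: "real A = \<alpha> * real N"
  shows "real (n_active A n i) = real N * act \<alpha> (frac N n) i"
proof -
  define S where "S = (\<Sum>k\<in>{1..<i}. n k)"
  have fS: "(\<Sum>k\<in>{1..<i}. frac N n k) = real S / real N"
    unfolding frac_def S_def by (simp add: sum_divide_distrib)
  have "real N * act \<alpha> (frac N n) i = real N * min (real (n i) / real N) (max 0 (\<alpha> - real S / real N))"
    unfolding act_def fS by (simp add: frac_def)
  also have "\<dots> = min (real (n i)) (max 0 (real A - real S))"
    using N A by (simp add: min_mult_distrib_left max_mult_distrib_left right_diff_distrib mult.commute)
  also have "\<dots> = real (n_active A n i)"
    unfolding n_active_def S_def[symmetric] by (cases "S \<le> A") (auto simp: of_nat_diff min_def max_def)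
  finally show ?thesis by simp
qed

lemma wip_mean:
  assumes N: "N > 0" and A: "real A = \<alpha> * real N" and n: "n \<in> config_space d N"
  shows "(\<Sum>i=1..d. real (n_active A n i) * P1 i j + real (n i - n_active A n i) * P0 i j)
      = real N * phi2 d P0 P1 \<alpha> (frac N n) j"
proof -
  have h2: "real (n i - n_active A n i) = real N * (frac N n i - act \<alpha> (frac N n) i)" for i
    using na_act[OF N A, of n i] na_le[of A n i] N by (simp add: of_nat_diff frac_def right_diff_distrib)
  have "(\<Sum>i=1..d. real (n_active A n i) * P1 i j + real (n i - n_active A n i) * P0 i j)
      = (\<Sum>i=1..d. real N * (act \<alpha> (frac N n) i * P1 i j + (frac N n i - act \<alpha> (frac N n) i) * P0 i j))"
    by (rule sum.cong) (simp_all only: h2 na_act[OF N A] distrib_left mult.assoc)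
  also have "\<dots> = real N * phi2 d P0 P1 \<alpha> (frac N n) j"
    unfolding phi2_def by (simp add: sum_distrib_left)
  finally show ?thesis .
qed

lemma wip_SG2:
  assumes s0: "stochastic d P0" and s1: "stochastic d P1" and j: "j \<in> {1..d}"
    and N: "N > 0" and A: "real A = \<alpha> * real N" and n: "n \<in> config_space d N" and a: "0 < \<alpha>" "\<alpha> < 1"
  shows "SG (wip_step d P0 P1 A n) j (real N * phi d P0 P1 \<alpha> (frac N n) j) (real N)"
proof -
  have sn: "(\<Sum>i=1..d. real (n i)) = real N" using n by (simp add: config_space_def flip: of_nat_sum)
  show ?thesis using wip_SG[OF s0 s1 j, of A n] wip_mean[OF N A n] sn phi_eq_phi2[OF frac_simplex[OF N n] a]
    by simp
qed

lemma wip_config: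
  assumes s0: "stochastic d P0" and s1: "stochastic d P1" and n: "n \<in> config_space d N"
  shows "set_pmf (wip_step d P0 P1 A n) \<subseteq> config_space d N"
proof -
  have "(\<Sum>i=1..d. n i) = N" using n by (simp add: config_space_def)
  then show ?thesis using wip_supp[OF s0 s1, of A n] by (auto simp: supp_ok_def config_space_def)
qed

lemma config_finite: "finite (config_space d N)"
proof -
  have "config_space d N \<subseteq> {f. \<forall>x. (x \<in> {1..d} \<longrightarrow> f x \<in> {0..N}) \<and> (x \<notin> {1..d} \<longrightarrow> f x = 0)}"
  proof
    fix f assume f: "f \<in> config_space d N"
    have "f x \<le> N" if "x \<in> {1..d}" for x
      using member_le_sum[of x "{1..d}" f] that f by (simp add: config_space_def)
    then show "f \<in> {f. \<forall>x. (x \<in> {1..d} \<longrightarrow> f x \<in> {0..N}) \<and> (x \<notin> {1..d} \<longrightarrow> f x = 0)}"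
      using f by (auto simp: config_space_def)
  qed
  then show ?thesis by (rule finite_subset) (rule finite_set_of_finite_funs; simp)
qed

lemma wip_finite:
  assumes s0: "stochastic d P0" and s1: "stochastic d P1" and n: "n \<in> config_space d N"
  shows "finite (set_pmf (wip_step d P0 P1 A n))"
  using wip_config[OF s0 s1 n] config_finite finite_subset by blast

lemma prob_as_exp: "measure_pmf.prob q S = measure_pmf.expectation q (indicator S :: _ \<Rightarrow> real)"
  by simp

lemma SG_chernoff:
  assumes q: "SG q j \<mu> k" and l: "\<bar>l\<bar> \<le> 1"
  shows "measure_pmf.prob q {x. t \<le> l * (real (x j) - \<mu>)} \<le> exp (k * l^2 - t)"
proof -
  have fq: "finite (set_pmf q)" using q by (simp add: SG_def)
  have "measure_pmf.prob q {x. t \<le> l * (real (x j) - \<mu>)}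
      = measure_pmf.expectation q (indicator {x. t \<le> l * (real (x j) - \<mu>)})" by simp
  also have "\<dots> \<le> measure_pmf.expectation q (\<lambda>x. exp (l * real (x j)) * exp (- l * \<mu> - t))"
  proof (rule exp_mono_pmf[OF fq])
    fix x
    have "indicator {x. t \<le> l * (real (x j) - \<mu>)} x \<le> exp (l * (real (x j) - \<mu>) - t)"
      by (auto simp: indicator_def)
    also have "\<dots> = exp (l * real (x j)) * exp (- l * \<mu> - t)" by (simp add: exp_add[symmetric] algebra_simps)
    finally show "indicator {x. t \<le> l * (real (x j) - \<mu>)} x \<le> exp (l * real (x j)) * exp (- l * \<mu> - t)" .
  qed
  also have "\<dots> = measure_pmf.expectation q (\<lambda>x. exp (l * real (x j))) * exp (- l * \<mu> - t)" by simp
  also have "\<dots> \<le> exp (l * \<mu> + k * l^2) * exp (- l * \<mu> - t)"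
    using q l by (intro mult_right_mono) (auto simp: SG_def)
  also have "\<dots> = exp (k * l^2 - t)" by (simp add: exp_add[symmetric] algebra_simps)
  finally show ?thesis .
qed

lemma SG_tail:
  assumes q: "SG q j \<mu> (real N)" and \<delta>: "0 < \<delta>" "\<delta> \<le> 2"
  shows "measure_pmf.prob q {x. \<delta> * real N \<le> \<bar>real (x j) - \<mu>\<bar>} \<le> 2 * exp (- (\<delta>^2 * real N / 4))"
proof -
  have l1: "\<bar>\<delta>/2\<bar> \<le> 1" "\<bar>-\<delta>/2\<bar> \<le> 1" using \<delta> by auto
  have U: "measure_pmf.prob q {x. \<delta>^2 * real N / 2 \<le> (\<delta>/2) * (real (x j) - \<mu>)} \<le> exp (real N * (\<delta>/2)^2 - \<delta>^2 * real N / 2)"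
    by (rule SG_chernoff[OF q l1(1)])
  have L: "measure_pmf.prob q {x. \<delta>^2 * real N / 2 \<le> (-\<delta>/2) * (real (x j) - \<mu>)} \<le> exp (real N * (-\<delta>/2)^2 - \<delta>^2 * real N / 2)"
    by (rule SG_chernoff[OF q l1(2)])
  have ex: "real N * (\<delta>/2)^2 - \<delta>^2 * real N / 2 = - (\<delta>^2 * real N / 4)"
           "real N * (-\<delta>/2)^2 - \<delta>^2 * real N / 2 = - (\<delta>^2 * real N / 4)"
    by (simp_all add: power2_eq_square field_simps)
  have sub: "{x. \<delta> * real N \<le> \<bar>real (x j) - \<mu>\<bar>} \<subseteq>
      {x. \<delta>^2 * real N / 2 \<le> (\<delta>/2) * (real (x j) - \<mu>)} \<union> {x. \<delta>^2 * real N / 2 \<le> (-\<delta>/2) * (real (x j) - \<mu>)}"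
  proof
    fix x assume "x \<in> {x. \<delta> * real N \<le> \<bar>real (x j) - \<mu>\<bar>}"
    then have h: "\<delta> * real N \<le> \<bar>real (x j) - \<mu>\<bar>" by simp
    have "(\<delta>/2) * (\<delta> * real N) \<le> (\<delta>/2) * \<bar>real (x j) - \<mu>\<bar>" using h \<delta> by (intro mult_left_mono) auto
    then show "x \<in> {x. \<delta>^2 * real N / 2 \<le> (\<delta>/2) * (real (x j) - \<mu>)} \<union> {x. \<delta>^2 * real N / 2 \<le> (-\<delta>/2) * (real (x j) - \<mu>)}"
      by (cases "0 \<le> real (x j) - \<mu>") (auto simp: power2_eq_square field_simps)
  qed
  have "measure_pmf.prob q {x. \<delta> * real N \<le> \<bar>real (x j) - \<mu>\<bar>}
     \<le> measure_pmf.prob q ({x. \<delta>^2 * real N / 2 \<le> (\<delta>/2) * (real (x j) - \<mu>)} \<union> {x. \<delta>^2 * real N / 2 \<le> (-\<delta>/2) * (real (x j) - \<mu>)})"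
    using sub by (intro measure_pmf.finite_measure_mono) auto
  also have "\<dots> \<le> measure_pmf.prob q {x. \<delta>^2 * real N / 2 \<le> (\<delta>/2) * (real (x j) - \<mu>)} + measure_pmf.prob q {x. \<delta>^2 * real N / 2 \<le> (-\<delta>/2) * (real (x j) - \<mu>)}"
    by (rule measure_Un_le) auto
  also have "\<dots> \<le> 2 * exp (- (\<delta>^2 * real N / 4))" using U L ex by simp
  finally show ?thesis .
qed




lemma one_step:
  assumes s0: "stochastic d P0" and s1: "stochastic d P1" and N: "N > 0" and A: "real A = \<alpha> * real N"
    and n: "n \<in> config_space d N" and a: "0 < \<alpha>" "\<alpha> < 1" and \<delta>: "0 < \<delta>" "\<delta> \<le> 2"
  shows "measure_pmf.prob (wip_step d P0 P1 A n) {x. \<exists>j\<in>{1..d}. \<delta> < \<bar>frac N x j - phi d P0 P1 \<alpha> (frac N n) j\<bar>}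
     \<le> real d * (2 * exp (- (\<delta>^2 * real N / 4)))"
proof -
  let ?q = "wip_step d P0 P1 A n"
  let ?F = "\<lambda>j. {x. \<delta> * real N \<le> \<bar>real (x j) - real N * phi d P0 P1 \<alpha> (frac N n) j\<bar>}"
  have sub: "{x. \<exists>j\<in>{1..d}. \<delta> < \<bar>frac N x j - phi d P0 P1 \<alpha> (frac N n) j\<bar>} \<subseteq> (\<Union>j\<in>{1..d}. ?F j)"
  proof
    fix x assume "x \<in> {x. \<exists>j\<in>{1..d}. \<delta> < \<bar>frac N x j - phi d P0 P1 \<alpha> (frac N n) j\<bar>}"
    then obtain j where j: "j \<in> {1..d}" and h: "\<delta> < \<bar>frac N x j - phi d P0 P1 \<alpha> (frac N n) j\<bar>" by auto
    have "frac N x j - phi d P0 P1 \<alpha> (frac N n) j = (real (x j) - real N * phi d P0 P1 \<alpha> (frac N n) j) / real N"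
      using N by (simp add: frac_def field_simps)
    then have eq: "\<bar>frac N x j - phi d P0 P1 \<alpha> (frac N n) j\<bar> * real N = \<bar>real (x j) - real N * phi d P0 P1 \<alpha> (frac N n) j\<bar>"
      using N by (simp add: abs_divide)
    have "\<delta> * real N \<le> \<bar>frac N x j - phi d P0 P1 \<alpha> (frac N n) j\<bar> * real N"
      using h N by (intro mult_right_mono) auto
    then have "\<delta> * real N \<le> \<bar>real (x j) - real N * phi d P0 P1 \<alpha> (frac N n) j\<bar>"
      using eq by simp
    then show "x \<in> (\<Union>j\<in>{1..d}. ?F j)" using j by auto
  qed
  have "measure_pmf.prob ?q {x. \<exists>j\<in>{1..d}. \<delta> < \<bar>frac N x j - phi d P0 P1 \<alpha> (frac N n) j\<bar>}
      \<le> measure_pmf.prob ?q (\<Union>j\<in>{1..d}. ?F j)"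
    using sub by (intro measure_pmf.finite_measure_mono) auto
  also have "\<dots> \<le> (\<Sum>j\<in>{1..d}. measure_pmf.prob ?q (?F j))"
    by (rule measure_UNION_le) auto
  also have "\<dots> \<le> (\<Sum>j\<in>{1..d}. 2 * exp (- (\<delta>^2 * real N / 4)))"
  proof (rule sum_mono)
    fix j assume j: "j \<in> {1..d}"
    show "measure_pmf.prob ?q (?F j) \<le> 2 * exp (- (\<delta>^2 * real N / 4))"
      by (rule SG_tail[OF wip_SG2[OF s0 s1 j N A n a] \<delta>])
  qed
  also have "\<dots> = real d * (2 * exp (- (\<delta>^2 * real N / 4)))" by simp
  finally show ?thesis .
qed

fun Kt :: "((nat \<Rightarrow> nat) \<Rightarrow> (nat \<Rightarrow> nat) pmf) \<Rightarrow> nat \<Rightarrow> (nat \<Rightarrow> nat) \<Rightarrow> (nat \<Rightarrow> nat) pmf" where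
  "Kt K 0 n = return_pmf n"
| "Kt K (Suc t) n = bind_pmf (K n) (Kt K t)"

lemma Kt_inv:
  assumes "\<forall>n\<in>C. set_pmf (K n) \<subseteq> C"
  shows "n \<in> C \<Longrightarrow> set_pmf (Kt K t n) \<subseteq> C"
proof (induction t arbitrary: n)
  case 0 then show ?case by simp
next
  case (Suc t)
  then show ?case using assms by auto
qed

lemma Kt_stat: "bind_pmf \<mu> K = \<mu> \<Longrightarrow> bind_pmf \<mu> (Kt K t) = \<mu>"
proof (induction t)
  case 0 then show ?case by (simp add: bind_return_pmf')
next
  case (Suc t)
  have e: "Kt K (Suc t) = (\<lambda>x. bind_pmf (K x) (Kt K t))" by (rule ext) simp
  have "bind_pmf \<mu> (Kt K (Suc t)) = bind_pmf (bind_pmf \<mu> K) (Kt K t)"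
    unfolding e by (simp add: bind_assoc_pmf)
  also have "\<dots> = \<mu>" using Suc by simp
  finally show ?case .
qed

lemma prob_bind_le:
  assumes fp: "finite (set_pmf p)" and ff: "\<And>x. x \<in> set_pmf p \<Longrightarrow> finite (set_pmf (f x))"
    and b: "\<And>x. x \<in> set_pmf p \<Longrightarrow> x \<notin> G \<Longrightarrow> measure_pmf.prob (f x) B \<le> c" and c: "0 \<le> c"
  shows "measure_pmf.prob (bind_pmf p f) B \<le> measure_pmf.prob p G + c"
proof -
  have "measure_pmf.prob (bind_pmf p f) B = measure_pmf.expectation (bind_pmf p f) (indicator B)" by simp
  also have "\<dots> = measure_pmf.expectation p (\<lambda>x. measure_pmf.expectation (f x) (indicator B))"
    by (rule exp_bind_pmf[OF fp ff])
  also have "\<dots> \<le> measure_pmf.expectation p (\<lambda>x. indicator G x + c)"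
  proof (rule exp_mono_pmf[OF fp])
    fix x assume x: "x \<in> set_pmf p"
    show "measure_pmf.expectation (f x) (indicator B) \<le> indicator G x + c"
    proof (cases "x \<in> G")
      case True
      have "measure_pmf.prob (f x) B \<le> 1" by (rule measure_pmf.prob_le_1)
      with c have "measure_pmf.prob (f x) B \<le> 1 + c" by linarith
      then show ?thesis using True by simp
    next
      case False then show ?thesis using b[OF x] by simp
    qed
  qed
  also have "\<dots> = measure_pmf.prob p G + c" using fp by (simp add: exp_add_pmf)
  finally show ?thesis .
qed




lemma Kt_config:
  assumes s0: "stochastic d P0" and s1: "stochastic d P1" and n: "n \<in> config_space d N"
  shows "set_pmf (Kt (wip_step d P0 P1 A) t n) \<subseteq> config_space d N"
  using Kt_inv[of "config_space d N" "wip_step d P0 P1 A"] wip_config[OF s0 s1] n by blast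

lemma Kt_finite:
  assumes s0: "stochastic d P0" and s1: "stochastic d P1" and n: "n \<in> config_space d N"
  shows "finite (set_pmf (Kt (wip_step d P0 P1 A) t n))"
  using Kt_config[OF s0 s1 n] config_finite finite_subset by blast

lemma multi_step:
  assumes s0: "stochastic d P0" and s1: "stochastic d P1" and N: "N > 0" and A: "real A = \<alpha> * real N"
    and a: "0 < \<alpha>" "\<alpha> < 1" and \<delta>: "0 < \<delta>" "\<delta> \<le> 2"
  shows "\<forall>n. n \<in> config_space d N \<longrightarrow>
    measure_pmf.prob (Kt (wip_step d P0 P1 A) t n)
      {x. \<exists>j\<in>{1..d}. \<delta> * (\<Sum>s<t. (real d * (2 * real d + 1)) ^ s) < \<bar>frac N x j - (phi d P0 P1 \<alpha> ^^ t) (frac N n) j\<bar>}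
    \<le> real t * (real d * (2 * exp (- (\<delta>^2 * real N / 4))))"
proof (induction t)
  case 0
  show ?case by (auto simp: indicator_def)
next
  case (Suc t)
  let ?K = "wip_step d P0 P1 A"
  let ?B = "real d * (2 * exp (- (\<delta>^2 * real N / 4)))"
  let ?Lc = "real d * (2 * real d + 1)"
  let ?\<Phi> = "phi d P0 P1 \<alpha>"
  have B0: "0 \<le> ?B" by simp
  show ?case
  proof (intro allI impI)
    fix n assume n: "n \<in> config_space d N"
    define G where "G = {y. \<exists>j\<in>{1..d}. \<delta> < \<bar>frac N y j - ?\<Phi> (frac N n) j\<bar>}"
    let ?Bs = "{x. \<exists>j\<in>{1..d}. \<delta> * (\<Sum>s<Suc t. ?Lc ^ s) < \<bar>frac N x j - (?\<Phi> ^^ Suc t) (frac N n) j\<bar>}"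
    have fn: "frac N n \<in> simplex_d d" by (rule frac_simplex[OF N n])
    have pn: "?\<Phi> (frac N n) \<in> simplex_d d" by (rule phi_simplex[OF s0 s1 fn a])
    have fin1: "finite (set_pmf (?K n))" by (rule wip_finite[OF s0 s1 n])
    have fin2: "finite (set_pmf (Kt ?K t y))" if y: "y \<in> set_pmf (?K n)" for y
    proof -
      have yc: "y \<in> config_space d N" using wip_config[OF s0 s1 n] y by blast
      show ?thesis by (rule Kt_finite[OF s0 s1 yc])
    qed
    have bnd: "measure_pmf.prob (Kt ?K t y) ?Bs \<le> real t * ?B" if y: "y \<in> set_pmf (?K n)" and yG: "y \<notin> G" for y
    proof -
      have yc: "y \<in> config_space d N" using wip_config[OF s0 s1 n] y by blast
      have fy: "frac N y \<in> simplex_d d" by (rule frac_simplex[OF N yc])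
      have hby: "\<forall>k\<in>{1..d}. \<bar>frac N y k - ?\<Phi> (frac N n) k\<bar> \<le> \<delta>" using yG unfolding G_def by auto
      have lip: "\<forall>j\<in>{1..d}. \<bar>(?\<Phi> ^^ t) (frac N y) j - (?\<Phi> ^^ t) (?\<Phi> (frac N n)) j\<bar> \<le> ?Lc ^ t * \<delta>"
        by (rule iter_lip[OF s0 s1 fy pn a hby]) (use \<delta> in simp)
      have sub: "?Bs \<subseteq> {x. \<exists>j\<in>{1..d}. \<delta> * (\<Sum>s<t. ?Lc ^ s) < \<bar>frac N x j - (?\<Phi> ^^ t) (frac N y) j\<bar>}"
      proof
        fix x assume "x \<in> ?Bs"
        then obtain j where j: "j \<in> {1..d}" and h: "\<delta> * (\<Sum>s<Suc t. ?Lc ^ s) < \<bar>frac N x j - (?\<Phi> ^^ Suc t) (frac N n) j\<bar>"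
          by auto
        have e1: "(?\<Phi> ^^ Suc t) (frac N n) = (?\<Phi> ^^ t) (?\<Phi> (frac N n))" by (simp only: funpow_Suc_right o_apply)
        have e2: "\<delta> * (\<Sum>s<Suc t. ?Lc ^ s) = \<delta> * (\<Sum>s<t. ?Lc ^ s) + ?Lc ^ t * \<delta>" by (simp add: algebra_simps)
        have "\<bar>(?\<Phi> ^^ t) (frac N y) j - (?\<Phi> ^^ t) (?\<Phi> (frac N n)) j\<bar> \<le> ?Lc ^ t * \<delta>" using lip j by blast
        then have "\<delta> * (\<Sum>s<t. ?Lc ^ s) < \<bar>frac N x j - (?\<Phi> ^^ t) (frac N y) j\<bar>"
          using h unfolding e1 e2 by linarith
        then show "x \<in> {x. \<exists>j\<in>{1..d}. \<delta> * (\<Sum>s<t. ?Lc ^ s) < \<bar>frac N x j - (?\<Phi> ^^ t) (frac N y) j\<bar>}"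
          using j by blast
      qed
      have "measure_pmf.prob (Kt ?K t y) ?Bs \<le> measure_pmf.prob (Kt ?K t y) {x. \<exists>j\<in>{1..d}. \<delta> * (\<Sum>s<t. ?Lc ^ s) < \<bar>frac N x j - (?\<Phi> ^^ t) (frac N y) j\<bar>}"
        using sub by (intro measure_pmf.finite_measure_mono) auto
      also have "\<dots> \<le> real t * ?B" using Suc yc by blast
      finally show ?thesis .
    qed
    have st1: "measure_pmf.prob (bind_pmf (?K n) (Kt ?K t)) ?Bs \<le> measure_pmf.prob (?K n) G + real t * ?B"
      by (rule prob_bind_le[OF fin1 fin2 bnd]) simp_all
    have st2: "measure_pmf.prob (?K n) G \<le> ?B"
      unfolding G_def by (rule one_step[OF s0 s1 N A n a \<delta>])
    have "measure_pmf.prob (Kt ?K (Suc t) n) ?Bs \<le> ?B + real t * ?B" using st1 st2 by simp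
    then show "measure_pmf.prob (Kt ?K (Suc t) n) ?Bs \<le> real (Suc t) * ?B"
      by (simp add: algebra_simps)
  qed
qed

lemma concentration:
  assumes s0: "stochastic d P0" and s1: "stochastic d P1" and a: "0 < \<alpha>" "\<alpha> < 1"
    and att: "uniform_global_attractor d (phi d P0 P1 \<alpha>) mstar"
    and \<epsilon>: "0 < \<epsilon>"
  shows "\<exists>b>0. \<exists>c>0. \<forall>N A \<mu>. N > 0 \<longrightarrow> real A = \<alpha> * real N \<longrightarrow> stationary_wip d P0 P1 N A \<mu> \<longrightarrow>
     measure_pmf.prob \<mu> {x. \<exists>j\<in>{1..d}. \<epsilon> < \<bar>frac N x j - mstar j\<bar>} \<le> b * exp (- c * real N)"
proof -
  let ?Lc = "real d * (2 * real d + 1)"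
  let ?\<Phi> = "phi d P0 P1 \<alpha>"
  obtain T where T: "\<forall>t\<ge>T. \<forall>m\<in>simplex_d d. \<forall>i\<in>{1..d}. \<bar>(?\<Phi> ^^ t) m i - mstar i\<bar> \<le> \<epsilon> / 2"
    using att \<epsilon> unfolding uniform_global_attractor_def by (meson half_gt_zero)
  define S where "S = (\<Sum>s<T. ?Lc ^ s)"
  have S0: "0 \<le> S" unfolding S_def by (intro sum_nonneg) simp
  define \<delta> where "\<delta> = min 2 (\<epsilon> / (2 * (S + 1)))"
  have \<delta>: "0 < \<delta>" "\<delta> \<le> 2" using \<epsilon> S0 unfolding \<delta>_def by auto
  have \<delta>S: "\<delta> * S \<le> \<epsilon> / 2"
  proof -
    have "\<delta> * S \<le> \<epsilon> / (2 * (S + 1)) * S" using S0 unfolding \<delta>_def by (intro mult_right_mono) auto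
    also have "\<dots> \<le> \<epsilon> / 2" using S0 \<epsilon> by (simp add: field_simps)
    finally show ?thesis .
  qed
  define b where "b = real T * (real d * 2) + 1"
  define c where "c = \<delta>^2 / 4"
  have b: "0 < b" unfolding b_def by (simp add: add_nonneg_pos)
  have c: "0 < c" unfolding c_def using \<delta> by simp
  have "\<forall>N A \<mu>. N > 0 \<longrightarrow> real A = \<alpha> * real N \<longrightarrow> stationary_wip d P0 P1 N A \<mu> \<longrightarrow>
     measure_pmf.prob \<mu> {x. \<exists>j\<in>{1..d}. \<epsilon> < \<bar>frac N x j - mstar j\<bar>} \<le> b * exp (- c * real N)"
  proof (intro allI impI)
    fix N A \<mu> assume N: "N > 0" and A: "real A = \<alpha> * real N" and st: "stationary_wip d P0 P1 N A \<mu>"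
    let ?K = "wip_step d P0 P1 A"
    let ?Bad = "{x. \<exists>j\<in>{1..d}. \<epsilon> < \<bar>frac N x j - mstar j\<bar>}"
    let ?B = "real d * (2 * exp (- (\<delta>^2 * real N / 4)))"
    have sup: "set_pmf \<mu> \<subseteq> config_space d N" and bs: "bind_pmf \<mu> ?K = \<mu>" using st by (auto simp: stationary_wip_def)
    have fmu: "finite (set_pmf \<mu>)" using sup config_finite finite_subset by blast
    have "measure_pmf.prob \<mu> ?Bad = measure_pmf.prob (bind_pmf \<mu> (Kt ?K T)) ?Bad" using Kt_stat[OF bs, of T] by simp
    have fin2: "finite (set_pmf (Kt ?K T n))" if n: "n \<in> set_pmf \<mu>" for n
    proof -
      have nc: "n \<in> config_space d N" using sup n by blast
      show ?thesis by (rule Kt_finite[OF s0 s1 nc])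
    qed
    have bnd: "measure_pmf.prob (Kt ?K T n) ?Bad \<le> real T * ?B" if n: "n \<in> set_pmf \<mu>" and nG: "n \<notin> {}" for n
    proof -
      have nc: "n \<in> config_space d N" using sup n by blast
      have fn: "frac N n \<in> simplex_d d" by (rule frac_simplex[OF N nc])
      have sub: "?Bad \<subseteq> {x. \<exists>j\<in>{1..d}. \<delta> * S < \<bar>frac N x j - (?\<Phi> ^^ T) (frac N n) j\<bar>}"
      proof
        fix x assume "x \<in> ?Bad"
        then obtain j where j: "j \<in> {1..d}" and h: "\<epsilon> < \<bar>frac N x j - mstar j\<bar>" by auto
        have "\<bar>(?\<Phi> ^^ T) (frac N n) j - mstar j\<bar> \<le> \<epsilon> / 2" using T fn j by blast
        then have "\<delta> * S < \<bar>frac N x j - (?\<Phi> ^^ T) (frac N n) j\<bar>" using h \<delta>S by linarith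
        then show "x \<in> {x. \<exists>j\<in>{1..d}. \<delta> * S < \<bar>frac N x j - (?\<Phi> ^^ T) (frac N n) j\<bar>}" using j by blast
      qed
      have "measure_pmf.prob (Kt ?K T n) ?Bad \<le> measure_pmf.prob (Kt ?K T n) {x. \<exists>j\<in>{1..d}. \<delta> * S < \<bar>frac N x j - (?\<Phi> ^^ T) (frac N n) j\<bar>}"
        using sub by (intro measure_pmf.finite_measure_mono) auto
      also have "\<dots> \<le> real T * ?B" using multi_step[OF s0 s1 N A a \<delta>, of T] nc unfolding S_def by blast
      finally show ?thesis .
    qed
    have "measure_pmf.prob (bind_pmf \<mu> (Kt ?K T)) ?Bad \<le> measure_pmf.prob \<mu> {} + real T * ?B"
      by (rule prob_bind_le[OF fmu fin2 bnd]) simp_all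
    note calc = this
    have "measure_pmf.prob \<mu> ?Bad \<le> real T * ?B" using calc Kt_stat[OF bs, of T] by simp
    also have "\<dots> = real T * (real d * 2) * exp (- c * real N)" unfolding c_def by simp
    also have "\<dots> \<le> b * exp (- c * real N)" unfolding b_def by (intro mult_right_mono) auto
    finally show "measure_pmf.prob \<mu> ?Bad \<le> b * exp (- c * real N)" .
  qed
  then show ?thesis using b c by blast
qed




lemma iterate_identity:
  assumes s: "s \<in> {1..d}" and h: "\<forall>j\<in>{1..d}. w j = Lin d P0 P1 s w j + err j"
  shows "\<forall>j\<in>{1..d}. w j = (Lin d P0 P1 s ^^ k) w j + (\<Sum>i<k. (Lin d P0 P1 s ^^ i) err j)"
proof (induction k)
  case 0 then show ?case by simp
next
  case (Suc k)
  let ?L = "Lin d P0 P1 s"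
  have c: "\<forall>j\<in>{1..d}. (?L ^^ k) w j = (?L ^^ k) (\<lambda>j. ?L w j + err j) j"
    by (rule Lin_pow_cong[OF s]) (use h in auto)
  have e: "(?L ^^ k) (\<lambda>j. ?L w j + err j) j = (?L ^^ k) (?L w) j + (?L ^^ k) err j" for j
    by (simp add: Lin_pow_add)
  have f: "(?L ^^ Suc k) w = (?L ^^ k) (?L w)" by (simp only: funpow_Suc_right o_apply)
  show ?case
  proof
    fix j assume j: "j \<in> {1..d}"
    have "w j = (?L ^^ k) w j + (\<Sum>i<k. (?L ^^ i) err j)" using Suc j by blast
    also have "(?L ^^ k) w j = (?L ^^ Suc k) w j + (?L ^^ k) err j" using c e f j by simp
    finally show "w j = (?L ^^ Suc k) w j + (\<Sum>i<Suc k. (?L ^^ i) err j)" by simp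
  qed
qed

lemma bound_from_iter:
  assumes d: "d \<ge> 1" and s0: "stochastic d P0" and s1: "stochastic d P1" and s: "s \<in> {1..d}"
    and contr: "\<forall>(w::nat\<Rightarrow>real) (e::real). (\<forall>i\<in>{1..d}. mstar i = 0 \<longrightarrow> 0 \<le> w i) \<longrightarrow> (\<Sum>i=1..d. w i) = 0
      \<longrightarrow> (\<forall>i\<in>{1..d}. \<bar>w i\<bar> \<le> e) \<longrightarrow> 0 < e
      \<longrightarrow> (\<forall>j\<in>{1..d}. \<bar>(Lin d P0 P1 s ^^ k) w j\<bar> \<le> e / 2)"
    and cone: "\<forall>i\<in>{1..d}. mstar i = 0 \<longrightarrow> 0 \<le> w i" and ws: "(\<Sum>i=1..d. w i) = 0"
    and it: "\<forall>j\<in>{1..d}. w j = (Lin d P0 P1 s ^^ k) w j + (\<Sum>i<k. (Lin d P0 P1 s ^^ i) err j)"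
    and eb: "\<forall>j\<in>{1..d}. \<bar>err j\<bar> \<le> E" and E: "0 \<le> E"
  shows "\<forall>j\<in>{1..d}. \<bar>w j\<bar> \<le> 2 * (real k * (4 * real d) ^ k * E)"
proof -
  let ?L = "Lin d P0 P1 s"
  let ?K = "4 * real d"
  have K1: "1 \<le> ?K" using d by simp
  have sb: "\<bar>\<Sum>i<k. (?L ^^ i) err j\<bar> \<le> real k * ?K ^ k * E" if j: "j \<in> {1..d}" for j
  proof -
    have "\<bar>\<Sum>i<k. (?L ^^ i) err j\<bar> \<le> (\<Sum>i<k. \<bar>(?L ^^ i) err j\<bar>)" by (rule sum_abs)
    also have "\<dots> \<le> (\<Sum>i<k. ?K ^ k * E)"
    proof (rule sum_mono)
      fix i assume i: "i \<in> {..<k}"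
      have "\<bar>(?L ^^ i) err j\<bar> \<le> ?K ^ i * E" using Lin_pow_bnd[OF s0 s1 s eb E, of i] j by blast
      also have "\<dots> \<le> ?K ^ k * E" using i K1 E by (intro mult_right_mono power_increasing) auto
      finally show "\<bar>(?L ^^ i) err j\<bar> \<le> ?K ^ k * E" .
    qed
    also have "\<dots> = real k * ?K ^ k * E" by simp
    finally show ?thesis .
  qed
  define e where "e = Max ((\<lambda>j. \<bar>w j\<bar>) ` {1..d})"
  have fin: "finite ((\<lambda>j. \<bar>w j\<bar>) ` {1..d})" "(\<lambda>j. \<bar>w j\<bar>) ` {1..d} \<noteq> {}" using d by auto
  have we: "\<forall>j\<in>{1..d}. \<bar>w j\<bar> \<le> e" unfolding e_def using fin by (auto intro: Max_ge)
  obtain j0 where j0: "j0 \<in> {1..d}" "e = \<bar>w j0\<bar>" unfolding e_def using Max_in[OF fin] by auto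
  have "e \<le> 2 * (real k * ?K ^ k * E)"
  proof (cases "e = 0")
    case True then show ?thesis using E by simp
  next
    case False
    then have epos: "0 < e" using j0 by simp
    have "\<bar>(?L ^^ k) w j0\<bar> \<le> e / 2" using contr cone ws we epos j0 by blast
    moreover have "\<bar>w j0\<bar> \<le> \<bar>(?L ^^ k) w j0\<bar> + \<bar>\<Sum>i<k. (?L ^^ i) err j0\<bar>"
      using it j0 by (metis abs_triangle_ineq)
    ultimately show ?thesis using sb[OF j0(1)] j0 by linarith
  qed
  then show ?thesis using we by fastforce
qed




theorem mainTheorem10:
  fixes d :: nat and P0 P1 :: "nat \<Rightarrow> nat \<Rightarrow> real" and R0 R1 :: "nat \<Rightarrow> real"
    and \<alpha> :: real and mstar :: "nat \<Rightarrow> real"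
  assumes "d \<ge> 1"
    and "stochastic d P0" and "stochastic d P1"
    and "0 < \<alpha>" and "\<alpha> < 1"
    and "unichain d P0 P1"
    and "strictly_indexable_sorted d P0 P1 R0 R1"
    and "mstar \<in> simplex_d d"
    and "\<forall>j\<in>{1..d}. phi d P0 P1 \<alpha> mstar j = mstar j"
    and "\<forall>m\<in>simplex_d d. (\<forall>j\<in>{1..d}. phi d P0 P1 \<alpha> m j = m j) \<longrightarrow> (\<forall>j\<in>{1..d}. m j = mstar j)"
    and "uniform_global_attractor d (phi d P0 P1 \<alpha>) mstar"
    and "\<not> singular d \<alpha> mstar"
  shows "\<exists>b c. b > 0 \<and> c > 0 \<and>
    (\<forall>N A \<mu>. N > 0 \<longrightarrow> real A = \<alpha> * real N \<longrightarrow> stationary_wip d P0 P1 N A \<mu> \<longrightarrow>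
       (\<forall>i\<in>{1..d}. \<bar>measure_pmf.expectation \<mu> (\<lambda>n. frac N n i) - mstar i\<bar> \<le> b * exp (- c * real N))
     \<and> measure_pmf.prob \<mu> {n. frac N n \<notin> Z d \<alpha> (s_of d \<alpha> mstar)} \<le> b * exp (- c * real N))"
proof -
  note s0 = assms(2) and s1 = assms(3) and a = assms(4,5) and m0 = assms(8) and fix0 = assms(9)
    and att = assms(11) and ns = assms(12) and d = assms(1)
  define s where "s = s_of d \<alpha> mstar"
  have sd: "s \<in> {1..d}" using s_of_spec[OF m0 a] unfolding s_def by auto
  obtain \<rho> where \<rho>: "\<rho> > 0" and nb: "\<forall>m\<in>simplex_d d. (\<forall>i\<in>{1..d}. \<bar>m i - mstar i\<bar> \<le> \<rho>) \<longrightarrow> s_of d \<alpha> m = s"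
    using nonsing_nbhd[OF m0 ns a] unfolding s_def by blast
  obtain k where contr: "\<forall>(w::nat\<Rightarrow>real) (e::real). (\<forall>i\<in>{1..d}. mstar i = 0 \<longrightarrow> 0 \<le> w i) \<longrightarrow> (\<Sum>i=1..d. w i) = 0
      \<longrightarrow> (\<forall>i\<in>{1..d}. \<bar>w i\<bar> \<le> e) \<longrightarrow> 0 < e
      \<longrightarrow> (\<forall>j\<in>{1..d}. \<bar>(Lin d P0 P1 s ^^ k) w j\<bar> \<le> e / 2)"
    using local_contraction[OF d s0 s1 a m0 fix0 att ns] unfolding s_def by blast
  obtain b1 where b1: "b1 > 0" and "\<exists>c>0. \<forall>N A \<mu>. N > 0 \<longrightarrow> real A = \<alpha> * real N \<longrightarrow> stationary_wip d P0 P1 N A \<mu> \<longrightarrow>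
     measure_pmf.prob \<mu> {x. \<exists>j\<in>{1..d}. \<rho> / 2 < \<bar>frac N x j - mstar j\<bar>} \<le> b1 * exp (- c * real N)"
    using concentration[OF s0 s1 a att, of "\<rho> / 2"] \<rho> by auto
  then obtain c1 where c1: "c1 > 0" and conc: "\<forall>N A \<mu>. N > 0 \<longrightarrow> real A = \<alpha> * real N \<longrightarrow> stationary_wip d P0 P1 N A \<mu> \<longrightarrow>
     measure_pmf.prob \<mu> {x. \<exists>j\<in>{1..d}. \<rho> / 2 < \<bar>frac N x j - mstar j\<bar>} \<le> b1 * exp (- c1 * real N)"
    by blast
  define K where "K = 4 * real d"
  define b where "b = (14 * real k * K ^ k + 1) * b1"
  have K0: "0 \<le> K" unfolding K_def by simp
  have bb1: "b1 \<le> b" unfolding b_def using b1 K0 by (simp add: algebra_simps)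
  have b: "b > 0" using b1 bb1 by linarith
  have "\<forall>N A \<mu>. N > 0 \<longrightarrow> real A = \<alpha> * real N \<longrightarrow> stationary_wip d P0 P1 N A \<mu> \<longrightarrow>
       (\<forall>i\<in>{1..d}. \<bar>measure_pmf.expectation \<mu> (\<lambda>n. frac N n i) - mstar i\<bar> \<le> b * exp (- c1 * real N))
     \<and> measure_pmf.prob \<mu> {n. frac N n \<notin> Z d \<alpha> (s_of d \<alpha> mstar)} \<le> b * exp (- c1 * real N)"
  proof (intro allI impI)
    fix N A \<mu> assume N: "N > 0" and A: "real A = \<alpha> * real N" and st: "stationary_wip d P0 P1 N A \<mu>"
    let ?K = "wip_step d P0 P1 A"
    let ?Zc = "{n. frac N n \<notin> Z d \<alpha> s}"
    let ?Bad = "{x. \<exists>j\<in>{1..d}. \<rho> / 2 < \<bar>frac N x j - mstar j\<bar>}"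
    have sup: "set_pmf \<mu> \<subseteq> config_space d N" and bs: "bind_pmf \<mu> ?K = \<mu>" using st by (auto simp: stationary_wip_def)
    have fmu: "finite (set_pmf \<mu>)" using sup config_finite finite_subset by blast
    have int: "integrable (measure_pmf \<mu>) f" for f :: "_ \<Rightarrow> real" using fmu by (rule integrable_measure_pmf_finite)
    have fs: "frac N x \<in> simplex_d d" if "x \<in> set_pmf \<mu>" for x using frac_simplex[OF N] sup that by blast
    have PB: "measure_pmf.prob \<mu> ?Bad \<le> b1 * exp (- c1 * real N)" using conc N A st by blast
    have PZ: "measure_pmf.prob \<mu> ?Zc \<le> measure_pmf.prob \<mu> ?Bad"
    proof -
      have "measure_pmf.prob \<mu> ?Zc = measure_pmf.prob \<mu> (?Zc \<inter> set_pmf \<mu>)" by (simp add: measure_Int_set_pmf)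
      also have "\<dots> \<le> measure_pmf.prob \<mu> ?Bad"
      proof (rule measure_pmf.finite_measure_mono)
        show "?Zc \<inter> set_pmf \<mu> \<subseteq> ?Bad"
        proof
          fix x assume x: "x \<in> ?Zc \<inter> set_pmf \<mu>"
          show "x \<in> ?Bad"
          proof (rule ccontr)
            assume "x \<notin> ?Bad"
            then have "\<forall>i\<in>{1..d}. \<bar>frac N x i - mstar i\<bar> \<le> \<rho>" using \<rho> by force
            then have "s_of d \<alpha> (frac N x) = s" using nb fs x by blast
            moreover have xs: "x \<in> set_pmf \<mu>" using x by blast
            ultimately have "frac N x \<in> Z d \<alpha> s" using fs[OF xs] by (simp add: Z_def)
            then show False using x by simp
          qed
        qed
      qed simp
      finally show ?thesis .
    qed
    have PZb: "measure_pmf.prob \<mu> ?Zc \<le> b1 * exp (- c1 * real N)" using PZ PB by linarith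
    define av where "av = (\<lambda>j. measure_pmf.expectation \<mu> (\<lambda>x. frac N x j))"
    define err where "err = (\<lambda>j. measure_pmf.expectation \<mu> (\<lambda>x. phi d P0 P1 \<alpha> (frac N x) j - psi d P0 P1 \<alpha> s (frac N x) j))"
    have aphi: "av j = measure_pmf.expectation \<mu> (\<lambda>x. phi d P0 P1 \<alpha> (frac N x) j)" if j: "j \<in> {1..d}" for j
    proof -
      have fK: "finite (set_pmf (?K x))" if "x \<in> set_pmf \<mu>" for x using wip_finite[OF s0 s1] sup that by blast
      have "av j = measure_pmf.expectation (bind_pmf \<mu> ?K) (\<lambda>x. frac N x j)" unfolding av_def using bs by simp
      also have "\<dots> = measure_pmf.expectation \<mu> (\<lambda>n. measure_pmf.expectation (?K n) (\<lambda>x. frac N x j))"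
        by (rule exp_bind_pmf[OF fmu fK])
      also have "\<dots> = measure_pmf.expectation \<mu> (\<lambda>x. phi d P0 P1 \<alpha> (frac N x) j)"
      proof (rule exp_cong_pmf)
        fix n assume n: "n \<in> set_pmf \<mu>"
        have nc: "n \<in> config_space d N" using sup n by blast
        have "measure_pmf.expectation (?K n) (\<lambda>x. real (x j)) = real N * phi d P0 P1 \<alpha> (frac N n) j"
          using wip_SG2[OF s0 s1 j N A nc a] by (simp add: SG_def)
        then show "measure_pmf.expectation (?K n) (\<lambda>x. frac N x j) = phi d P0 P1 \<alpha> (frac N n) j"
          unfolding frac_def using N by simp
      qed
      finally show ?thesis .
    qed
    have apsi: "measure_pmf.expectation \<mu> (\<lambda>x. psi d P0 P1 \<alpha> s (frac N x) j) = psi d P0 P1 \<alpha> s av j" for j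
    proof -
      have t1: "measure_pmf.expectation \<mu> (\<lambda>x. \<Sum>i\<in>{1..<s}. frac N x i * P1 i j) = (\<Sum>i\<in>{1..<s}. av i * P1 i j)"
        by (simp add: Bochner_Integration.integral_sum int av_def)
      have t4: "measure_pmf.expectation \<mu> (\<lambda>x. \<Sum>i\<in>{s<..d}. frac N x i * P0 i j) = (\<Sum>i\<in>{s<..d}. av i * P0 i j)"
        by (simp add: Bochner_Integration.integral_sum int av_def)
      have t2: "measure_pmf.expectation \<mu> (\<lambda>x. (\<alpha> - (\<Sum>i\<in>{1..<s}. frac N x i)) * P1 s j) = (\<alpha> - (\<Sum>i\<in>{1..<s}. av i)) * P1 s j"
        by (simp add: Bochner_Integration.integral_sum int Bochner_Integration.integral_diff[OF int int] av_def)
      have t3: "measure_pmf.expectation \<mu> (\<lambda>x. ((\<Sum>i\<in>{1..s}. frac N x i) - \<alpha>) * P0 s j) = ((\<Sum>i\<in>{1..s}. av i) - \<alpha>) * P0 s j"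
        by (simp add: Bochner_Integration.integral_sum int Bochner_Integration.integral_diff[OF int int] av_def)
      show ?thesis unfolding psi_def
        by (simp only: Bochner_Integration.integral_add[OF int int] t1 t2 t3 t4)
    qed
    have aeq: "\<forall>j\<in>{1..d}. av j = psi d P0 P1 \<alpha> s av j + err j"
    proof
      fix j assume j: "j \<in> {1..d}"
      have "av j = measure_pmf.expectation \<mu> (\<lambda>x. psi d P0 P1 \<alpha> s (frac N x) j) + err j"
        unfolding aphi[OF j] err_def by (simp add: Bochner_Integration.integral_diff[OF int int])
      then show "av j = psi d P0 P1 \<alpha> s av j + err j" using apsi by simp
    qed
    have mfix: "\<forall>j\<in>{1..d}. mstar j = psi d P0 P1 \<alpha> s mstar j"
      using fix0 phi_psi[of d \<alpha> mstar s] unfolding s_def by auto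
    define w where "w = (\<lambda>j. av j - mstar j)"
    have weq: "\<forall>j\<in>{1..d}. w j = Lin d P0 P1 s w j + err j"
    proof
      fix j assume j: "j \<in> {1..d}"
      have "w j = psi d P0 P1 \<alpha> s av j - psi d P0 P1 \<alpha> s mstar j + err j"
        using aeq mfix j unfolding w_def by auto
      then show "w j = Lin d P0 P1 s w j + err j" unfolding w_def by (simp add: psi_diff)
    qed
    have it: "\<forall>j\<in>{1..d}. w j = (Lin d P0 P1 s ^^ k) w j + (\<Sum>i<k. (Lin d P0 P1 s ^^ i) err j)"
      by (rule iterate_identity[OF sd weq])
    have cone: "\<forall>i\<in>{1..d}. mstar i = 0 \<longrightarrow> 0 \<le> w i"
    proof (intro ballI impI)
      fix i assume "i \<in> {1..d}" "mstar i = 0"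
      moreover have "0 \<le> av i" unfolding av_def by (intro integral_nonneg_AE) (auto simp: frac_def)
      ultimately show "0 \<le> w i" unfolding w_def by simp
    qed
    have ws: "(\<Sum>i=1..d. w i) = 0"
    proof -
      have "(\<Sum>i=1..d. av i) = measure_pmf.expectation \<mu> (\<lambda>x. \<Sum>i=1..d. frac N x i)"
        unfolding av_def by (simp add: Bochner_Integration.integral_sum int)
      also have "\<dots> = measure_pmf.expectation \<mu> (\<lambda>x. 1)"
        by (rule exp_cong_pmf) (use fs in \<open>auto simp: simplex_d_def\<close>)
      also have "\<dots> = 1" by simp
      finally have "(\<Sum>i=1..d. av i) = 1" .
      moreover have "(\<Sum>i=1..d. mstar i) = 1" using m0 by (simp add: simplex_d_def)
      ultimately show ?thesis unfolding w_def by (simp add: sum_subtractf)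
    qed
    define E where "E = 7 * measure_pmf.prob \<mu> ?Zc"
    have E0: "0 \<le> E" unfolding E_def by simp
    have eb: "\<forall>j\<in>{1..d}. \<bar>err j\<bar> \<le> E"
    proof
      fix j assume j: "j \<in> {1..d}"
      have pw: "\<bar>phi d P0 P1 \<alpha> (frac N x) j - psi d P0 P1 \<alpha> s (frac N x) j\<bar> \<le> 7 * indicator ?Zc x"
        if x: "x \<in> set_pmf \<mu>" for x
      proof (cases "x \<in> ?Zc")
        case False
        then have "s_of d \<alpha> (frac N x) = s" by (simp add: Z_def fs[OF x])
        then show ?thesis using phi_psi[of d \<alpha> "frac N x" s] by simp
      next
        case True
        have ps: "phi d P0 P1 \<alpha> (frac N x) \<in> simplex_d d" by (rule phi_simplex[OF s0 s1 fs[OF x] a])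
        have "\<bar>phi d P0 P1 \<alpha> (frac N x) j\<bar> \<le> 1" using ps j by (auto simp: simplex_d_def)
        moreover have "\<bar>psi d P0 P1 \<alpha> s (frac N x) j\<bar> \<le> 6" by (rule psi_bnd[OF s0 s1 sd fs[OF x] a j])
        ultimately show ?thesis using True by simp
      qed
      have "err j \<le> measure_pmf.expectation \<mu> (\<lambda>x. 7 * indicator ?Zc x)"
        unfolding err_def by (rule exp_mono_pmf[OF fmu]) (use pw in \<open>auto simp: abs_le_iff\<close>)
      moreover have "- err j \<le> measure_pmf.expectation \<mu> (\<lambda>x. 7 * indicator ?Zc x)"
      proof -
        have "- err j = measure_pmf.expectation \<mu> (\<lambda>x. - (phi d P0 P1 \<alpha> (frac N x) j - psi d P0 P1 \<alpha> s (frac N x) j))"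
          unfolding err_def by (subst Bochner_Integration.integral_minus) (rule refl)
        also have "\<dots> \<le> measure_pmf.expectation \<mu> (\<lambda>x. 7 * indicator ?Zc x)"
          by (rule exp_mono_pmf[OF fmu]) (use pw in \<open>auto simp: abs_le_iff\<close>)
        finally show ?thesis .
      qed
      moreover have "measure_pmf.expectation \<mu> (\<lambda>x. 7 * indicator ?Zc x) = E" unfolding E_def by simp
      ultimately show "\<bar>err j\<bar> \<le> E" by linarith
    qed
    have wb: "\<forall>j\<in>{1..d}. \<bar>w j\<bar> \<le> 2 * (real k * (4 * real d) ^ k * E)"
      by (rule bound_from_iter[OF d s0 s1 sd contr cone ws it eb E0])
    have fin: "2 * (real k * (4 * real d) ^ k * E) \<le> b * exp (- c1 * real N)"
    proof -
      have "2 * (real k * (4 * real d) ^ k * E) = 14 * real k * K ^ k * measure_pmf.prob \<mu> ?Zc"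
        unfolding E_def K_def by simp
      also have "\<dots> \<le> 14 * real k * K ^ k * (b1 * exp (- c1 * real N))"
        using PZb K0 by (intro mult_left_mono) auto
      also have "\<dots> \<le> b * exp (- c1 * real N)"
        unfolding b_def using b1 K0 by (simp add: algebra_simps)
      finally show ?thesis .
    qed
    show "(\<forall>i\<in>{1..d}. \<bar>measure_pmf.expectation \<mu> (\<lambda>n. frac N n i) - mstar i\<bar> \<le> b * exp (- c1 * real N))
     \<and> measure_pmf.prob \<mu> {n. frac N n \<notin> Z d \<alpha> (s_of d \<alpha> mstar)} \<le> b * exp (- c1 * real N)"
    proof
      show "\<forall>i\<in>{1..d}. \<bar>measure_pmf.expectation \<mu> (\<lambda>n. frac N n i) - mstar i\<bar> \<le> b * exp (- c1 * real N)"
        using wb fin unfolding w_def av_def by fastforce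
      have "b1 * exp (- c1 * real N) \<le> b * exp (- c1 * real N)" using bb1 by (intro mult_right_mono) auto
      then show "measure_pmf.prob \<mu> {n. frac N n \<notin> Z d \<alpha> (s_of d \<alpha> mstar)} \<le> b * exp (- c1 * real N)"
        using PZb unfolding s_def by linarith
    qed
  qed
  then show ?thesis using b c1 by blast
qed



end
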